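(* Let $K$ be a non-Archimedean local field, $n\ge 2$, $\alpha>0$, and let $G\subset K^n$ with $0\notin G$. Let $u\in\mathcal{H}_\infty(K^n)$ be $\alpha$-harmonic on $G$, i.e. $(D^{\alpha,n}u)(x)=0$ for all $x\in G$. Then the function $\mathcal{K}u$ is $\alpha$-harmonic on the set $\{\mathcal{J}(x): x\in G\}$, i.e. $(D^{\alpha,n}(\mathcal{K}u))(y)=0$ for all $y\in\mathcal{J}(G)$.
   Context: $K$ is a non-Archimedean local field with normalized absolute value $|\cdot|_K$, ring of integers $O=\{|x|_K\le 1\}$, maximal ideal $P=\{|x|_K<1\}$, residue field cardinality $q=\operatorname{card}(O/P)$. For $z=(z_1,\dots,z_n)\in K^n$, $\|z\|_{K^n}=\max_{1\le j\le n}|z_j|_K$; $dy$ denotes Haar measure on $K^n$ normalized so that the unit ball has measure $1$. The Vladimirov–Taibleson operator is \[ \big(D^{\alpha,n}u\big)(x)=c_{n,\alpha}\int_{K^n}\frac{u(x)-u(y)}{\|x-y\|_{K^n}^{n+\alpha}}\,dy,\qquad c_{n,\alpha}=\frac{q-1}{1-q^{-\alpha-n}}. \] Let $L$ be the unramified extension of $K$ of degree $n$, and fix a canonical basis of $L$ over $K$, i.e. a set of representatives in the ring of integers of $L$ of a basis of the residue field of $L$ over the residue field of $K$. Let $\mathcal{U}\colon K^n\to L$ be the $K$-linear isomorphism sending $(x_1,\dots,x_n)$ to the element of $L$ with these coordinates in the canonical basis. The inversion is $\mathcal{J}=\mathcal{U}^{-1}\circ\Delta\circ\mathcal{U}$ on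 $K^n\setminus\{0\}$, where $\Delta(x)=1/x$ in $L$. The non-Archimedean Kelvin transformation is $(\mathcal{K}u)(x)=\|x\|_{K^n}^{\alpha-n}u(\mathcal{J}(x))$ for $0\ne x\in K^n$. $\mathcal{H}_\infty(K^n)=\bigcap_{\ell\ge0}\mathcal{H}_\ell(K^n)$, where $\mathcal{H}_\ell(K^n)$ is the completion of the space $\mathcal{D}(K^n)$ of locally constant compactly supported complex functions with respect to $\langle\varphi,\psi\rangle_\ell=\int_{K^n}\max(1,\|\xi\|_{K^n})^\ell\,\widehat\varphi(\xi)\overline{\widehat\psi(\xi)}\,d\xi$ ($\widehat{\cdot}$ the Fourier transform with respect to a fixed rank-zero additive character). *)

theory Defs
  imports "HOL-Analysis.Analysis"
begin

definition nonarch_local_field :: "('k::field \<Rightarrow> real) \<Rightarrow> nat \<Rightarrow> bool" where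
  "nonarch_local_field absK q \<longleftrightarrow>
     (\<forall>x. absK x \<ge> 0) \<and> (\<forall>x. absK x = 0 \<longleftrightarrow> x = 0) \<and>
     (\<forall>x y. absK (x * y) = absK x * absK y) \<and>
     (\<forall>x y. absK (x + y) \<le> max (absK x) (absK y)) \<and>
     \<comment> \<open>normalized: the value group is exactly q^Z\<close>
     {absK x | x. x \<noteq> 0} = {real q powr real_of_int k | k. True} \<and>
     \<comment> \<open>residue field O/P is finite of cardinality q\<close>
     finite ({x. absK x \<le> 1} // {(x, y). absK x \<le> 1 \<and> absK y \<le> 1 \<and> absK (x - y) < 1}) \<and>
     card ({x. absK x \<le> 1} // {(x, y). absK x \<le> 1 \<and> absK y \<le> 1 \<and> absK (x - y) < 1}) = q \<and>
     \<comment> \<open>completeness\<close>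
     (\<forall>s :: nat \<Rightarrow> 'k. (\<forall>\<epsilon>>0. \<exists>N. \<forall>m\<ge>N. \<forall>k\<ge>N. absK (s m - s k) < \<epsilon>) \<longrightarrow>
        (\<exists>l. \<forall>\<epsilon>>0. \<exists>N. \<forall>m\<ge>N. absK (s m - l) < \<epsilon>))"

definition normK :: "('k::field \<Rightarrow> real) \<Rightarrow> 'k ^ 'n \<Rightarrow> real" where
  "normK absK x = (MAX i \<in> UNIV. absK (x $ i))"

definition haar_Kn :: "('k::field \<Rightarrow> real) \<Rightarrow> ('k ^ 'n) measure \<Rightarrow> bool" where
  "haar_Kn absK M \<longleftrightarrow>
     space M = UNIV \<and>
     sets M = sigma_sets UNIV {{y. normK absK (y - a) \<le> r} | a r. True} \<and>
     (\<forall>a A. A \<in> sets M \<longrightarrow> emeasure M ((+) a ` A) = emeasure M A) \<and>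
     emeasure M {x. normK absK x \<le> 1} = 1"

text \<open>Additive character of rank zero: trivial on O, nontrivial on P^{-1}.\<close>
definition rank_zero_char :: "('k::field \<Rightarrow> real) \<Rightarrow> nat \<Rightarrow> ('k \<Rightarrow> complex) \<Rightarrow> bool" where
  "rank_zero_char absK q chi \<longleftrightarrow>
     (\<forall>x y. chi (x + y) = chi x * chi y) \<and> (\<forall>x. cmod (chi x) = 1) \<and>
     (\<forall>x. absK x \<le> 1 \<longrightarrow> chi x = 1) \<and> (\<exists>x. absK x \<le> real q \<and> chi x \<noteq> 1)"

definition fourierK :: "('k ^ 'n) measure \<Rightarrow> ('k::field \<Rightarrow> complex) \<Rightarrow> ('k ^ 'n \<Rightarrow> complex) \<Rightarrow> 'k ^ 'n \<Rightarrow> complex" where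
  "fourierK M chi \<phi> \<xi> = (\<integral>x. \<phi> x * chi (\<Sum>i\<in>UNIV. \<xi> $ i * x $ i) \<partial>M)"

definition test_fun :: "('k::field \<Rightarrow> real) \<Rightarrow> ('k ^ 'n \<Rightarrow> complex) \<Rightarrow> bool" where
  "test_fun absK \<phi> \<longleftrightarrow>
     (\<exists>r>0. \<forall>x y. normK absK (x - y) < r \<longrightarrow> \<phi> x = \<phi> y) \<and>
     (\<exists>R. \<forall>x. normK absK x > R \<longrightarrow> \<phi> x = 0)"

text \<open>u belongs to H_infinity: it is (the pointwise representative of) the limit of a
  sequence of test functions that is Cauchy for every norm ||.||_l, l >= 0.\<close>
definition H_infty :: "('k::field \<Rightarrow> real) \<Rightarrow> ('k ^ 'n) measure \<Rightarrow> ('k \<Rightarrow> complex) \<Rightarrow> ('k ^ 'n \<Rightarrow> complex) \<Rightarrow> bool" where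
  "H_infty absK M chi u \<longleftrightarrow>
     (\<exists>\<phi> :: nat \<Rightarrow> 'k ^ 'n \<Rightarrow> complex.
        (\<forall>k. test_fun absK (\<phi> k)) \<and>
        (\<forall>l::real. l \<ge> 0 \<longrightarrow> (\<forall>\<epsilon>>0. \<exists>N. \<forall>j\<ge>N. \<forall>k\<ge>N.
            (\<integral>\<xi>. max 1 (normK absK \<xi>) powr l *
                 (cmod (fourierK M chi (\<lambda>x. \<phi> j x - \<phi> k x) \<xi>))\<^sup>2 \<partial>M) < \<epsilon>)) \<and>
        (\<forall>x. (\<lambda>k. \<phi> k x) \<longlonglongrightarrow> u x))"

definition VT_op :: "('k::field \<Rightarrow> real) \<Rightarrow> nat \<Rightarrow> ('k ^ 'n) measure \<Rightarrow> real \<Rightarrow> ('k ^ 'n \<Rightarrow> complex) \<Rightarrow> 'k ^ 'n \<Rightarrow> complex" where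
  "VT_op absK q M \<alpha> u x =
     complex_of_real ((real q - 1) / (1 - real q powr (- \<alpha> - real CARD('n)))) *
     (\<integral>y. (u x - u y) / complex_of_real (normK absK (x - y) powr (real CARD('n) + \<alpha>)) \<partial>M)"

definition unram_canonical_basis ::
  "('k::field \<Rightarrow> real) \<Rightarrow> ('l::field \<Rightarrow> real) \<Rightarrow> ('k \<Rightarrow> 'l) \<Rightarrow> ('n::finite \<Rightarrow> 'l) \<Rightarrow> bool" where
  "unram_canonical_basis absK absL \<iota> e \<longleftrightarrow>
     \<comment> \<open>\<iota> : K \<rightarrow> L field embedding\<close>
     (\<forall>a b. \<iota> (a + b) = \<iota> a + \<iota> b) \<and> (\<forall>a b. \<iota> (a * b) = \<iota> a * \<iota> b) \<and> \<iota> 1 = 1 \<and>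
     \<comment> \<open>absolute value on L extending that of K\<close>
     (\<forall>x. absL x \<ge> 0) \<and> (\<forall>x. absL x = 0 \<longleftrightarrow> x = 0) \<and>
     (\<forall>x y. absL (x * y) = absL x * absL y) \<and>
     (\<forall>x y. absL (x + y) \<le> max (absL x) (absL y)) \<and>
     (\<forall>a. absL (\<iota> a) = absK a) \<and>
     \<comment> \<open>e is a K-basis of L (so [L:K] = card n)\<close>
     bij (\<lambda>x :: 'k ^ 'n. \<Sum>i\<in>UNIV. \<iota> (x $ i) * e i) \<and>
     \<comment> \<open>e lies in O_L and its residues form a basis of the residue field of L over that of K\<close>
     (\<forall>i. absL (e i) \<le> 1) \<and>
     (\<forall>y. absL y \<le> 1 \<longrightarrow> (\<exists>a :: 'k ^ 'n. (\<forall>i. absK (a $ i) \<le> 1) \<and>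
          absL (y - (\<Sum>i\<in>UNIV. \<iota> (a $ i) * e i)) < 1)) \<and>
     (\<forall>a :: 'k ^ 'n. (\<forall>i. absK (a $ i) \<le> 1) \<and> absL (\<Sum>i\<in>UNIV. \<iota> (a $ i) * e i) < 1 \<longrightarrow>
          (\<forall>i. absK (a $ i) < 1))"

definition U_map :: "('k::field \<Rightarrow> 'l::field) \<Rightarrow> ('n::finite \<Rightarrow> 'l) \<Rightarrow> 'k ^ 'n \<Rightarrow> 'l" where
  "U_map \<iota> e x = (\<Sum>i\<in>UNIV. \<iota> (x $ i) * e i)"

definition J_map :: "('k::field \<Rightarrow> 'l::field) \<Rightarrow> ('n::finite \<Rightarrow> 'l) \<Rightarrow> 'k ^ 'n \<Rightarrow> 'k ^ 'n" where
  "J_map \<iota> e x = inv (U_map \<iota> e) (inverse (U_map \<iota> e x))"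

text \<open>Kelvin transform; its value at 0 (where it is undefined) is set to 0.\<close>
definition kelvin :: "('k::field \<Rightarrow> real) \<Rightarrow> ('k \<Rightarrow> 'l::field) \<Rightarrow> ('n::finite \<Rightarrow> 'l) \<Rightarrow> real \<Rightarrow>
    ('k ^ 'n \<Rightarrow> complex) \<Rightarrow> 'k ^ 'n \<Rightarrow> complex" where
  "kelvin absK \<iota> e \<alpha> u x = (if x = 0 then 0 else
     complex_of_real (normK absK x powr (\<alpha> - real CARD('n))) * u (J_map \<iota> e x))"

end

theory Submission
  imports Defs
begin

locale KF =
  fixes absK :: "'k::field \<Rightarrow> real" and q :: nat
  assumes nalf: "nonarch_local_field absK q"
begin

lemma abs_nonneg: "absK x \<ge> 0" using nalf unfolding nonarch_local_field_def by blast
lemma abs_zero_iff[simp]: "absK x = 0 \<longleftrightarrow> x = 0" using nalf unfolding nonarch_local_field_def by blast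
lemma abs_zero[simp]: "absK 0 = 0" using abs_zero_iff by blast
lemma abs_mult: "absK (x * y) = absK x * absK y" using nalf unfolding nonarch_local_field_def by blast
lemma abs_ultra: "absK (x + y) \<le> max (absK x) (absK y)" using nalf unfolding nonarch_local_field_def by blast
lemma valgroup: "{absK x | x. x \<noteq> 0} = {real q powr real_of_int k | k. True}"
  using nalf unfolding nonarch_local_field_def by blast

lemma abs_one[simp]: "absK 1 = 1"
proof -
  have "absK 1 = absK 1 * absK 1" using abs_mult[of 1 1] by simp
  moreover have "absK 1 \<noteq> 0" by simp
  ultimately show ?thesis by (metis mult_cancel_left1)
qed

lemma abs_minus_one[simp]: "absK (-1) = 1"
proof -
  have h: "absK (-1) * absK (-1) = 1" using abs_mult[of "-1" "-1"] by simp
  have "(absK (-1) - 1) * (absK (-1) + 1) = 0" using h by (simp add: algebra_simps)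
  moreover have "absK (-1) + 1 \<noteq> 0" using abs_nonneg[of "-1"] by linarith
  ultimately show ?thesis by simp
qed

lemma abs_minus[simp]: "absK (- x) = absK x"
  using abs_mult[of "-1" x] by simp

lemma abs_diff_comm: "absK (x - y) = absK (y - x)"
  by (metis abs_minus minus_diff_eq)

lemma abs_ultra_diff: "absK (x - y) \<le> max (absK x) (absK y)"
  using abs_ultra[of x "-y"] by simp

lemma abs_inverse: "absK (inverse x) = 1 / absK x"
proof (cases "x = 0")
  case False
  then have "absK (inverse x) * absK x = 1" using abs_mult[of "inverse x" x] by simp
  then show ?thesis by (simp add: eq_divide_eq)
qed simp

lemma abs_strict: assumes "absK y < absK x" shows "absK (x + y) = absK x"
proof -
  have "absK (x + y) \<le> absK x" using abs_ultra[of x y] assms by simp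
  moreover have "absK x \<le> max (absK (x + y)) (absK y)" using abs_ultra[of "x+y" "-y"] by simp
  ultimately show ?thesis using assms by linarith
qed

lemma abs_val: assumes "x \<noteq> 0" shows "\<exists>k::int. absK x = real q powr k"
  using valgroup assms by blast

lemma abs_exists: "\<exists>c. c \<noteq> 0 \<and> absK c = real q powr (real_of_int k)"
proof -
  have "real q powr real_of_int k \<in> {real q powr real_of_int k | k. True}" by blast
  then show ?thesis using valgroup by (smt (verit, best) mem_Collect_eq)
qed

definition "Ok = {x. absK x \<le> 1}"
definition "Rk = {(x, y). absK x \<le> 1 \<and> absK y \<le> 1 \<and> absK (x - y) < 1}"

lemma quot_finite: "finite (Ok // Rk)" and quot_card: "card (Ok // Rk) = q"
  using nalf unfolding nonarch_local_field_def Ok_def Rk_def by blast+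

lemma equiv_RR: "equiv Ok Rk"
proof (rule equivI)
  show "Rk \<subseteq> Ok \<times> Ok" unfolding Ok_def Rk_def by auto
  show "refl_on Ok Rk" unfolding refl_on_def Ok_def Rk_def by auto
  show "sym Rk" unfolding sym_def Rk_def using abs_diff_comm by auto
  show "trans Rk" unfolding trans_def Rk_def
  proof (clarsimp)
    fix x y z assume a: "absK (x - y) < 1" "absK (y - z) < 1"
    have "x - z = (x - y) + (y - z)" by simp
    then show "absK (x - z) < 1" using abs_ultra[of "x-y" "y-z"] a by simp
  qed
qed

lemma q_ge2: "q \<ge> 2"
proof -
  have a: "Rk `` {0} \<in> Ok // Rk" "Rk `` {1} \<in> Ok // Rk"
    by (auto intro!: quotientI simp: Ok_def)
  have "0 \<in> Rk `` {0}" "0 \<notin> Rk `` {1}" by (auto simp: Rk_def)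
  then have "Rk `` {0} \<noteq> Rk `` {1}" by blast
  then have "card {Rk `` {0}, Rk `` {1}} = 2" by simp
  moreover have "card {Rk `` {0}, Rk `` {1}} \<le> card (Ok // Rk)"
    using a quot_finite by (intro card_mono) auto
  ultimately show ?thesis using quot_card by simp
qed

lemma q_gt1: "real q > 1" using q_ge2 by simp
lemma q_pos: "real q > 0" using q_ge2 by simp

lemma abs_lt1: assumes "absK x < 1" shows "absK x \<le> real q powr (-1)"
proof (cases "x = 0")
  case False
  then obtain k :: int where k: "absK x = real q powr k" using abs_val by blast
  then have "real q powr real_of_int k < real q powr real_of_int 0" using assms q_pos by simp
  then have "k < 0" using powr_less_cancel_iff[OF q_gt1] by (metis of_int_less_iff)
  then have "real_of_int k \<le> -1" by simp
  then have "real q powr real_of_int k \<le> real q powr (-1)" using q_gt1 by (intro powr_mono) auto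
  then show ?thesis using k by simp
qed (use q_pos q_ge2 in simp)

end

context KF begin

abbreviation N :: "'k ^ 'n \<Rightarrow> real" where "N \<equiv> normK absK"

lemma N_le_iff: "N v \<le> t \<longleftrightarrow> (\<forall>i. absK (v $ i) \<le> t)"
  unfolding normK_def by (simp add: Max_le_iff)

lemma N_attained: "\<exists>i. N v = absK (v $ i)"
proof -
  have "(MAX i\<in>UNIV. absK (v $ i)) \<in> (\<lambda>i. absK (v $ i)) ` UNIV" by (intro Max_in) auto
  then show ?thesis unfolding normK_def by (metis imageE)
qed

lemma N_ge: "absK (v $ i) \<le> N v"
  unfolding normK_def by (intro Max_ge) auto

lemma N_nonneg: "N v \<ge> 0" using N_ge[of v] abs_nonneg order_trans by blast

lemma N_zero_iff[simp]: "N v = 0 \<longleftrightarrow> v = 0"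
proof
  assume "N v = 0"
  then have "\<forall>i. absK (v $ i) \<le> 0" using N_le_iff[of v 0] by simp
  then have "\<forall>i. v $ i = 0" using abs_nonneg by (meson abs_zero_iff antisym)
  then show "v = 0" by (simp add: vec_eq_iff)
next
  assume "v = 0"
  then show "N v = 0" using N_le_iff[of v 0] N_nonneg[of v] by auto
qed

lemma N_zero[simp]: "N 0 = 0" by simp

lemma N_pos: "v \<noteq> 0 \<Longrightarrow> N v > 0" using N_nonneg[of v] N_zero_iff[of v] by linarith

lemma N_ultra: "N (v + w) \<le> max (N v) (N w)"
  unfolding N_le_iff
proof
  fix i
  have "absK ((v + w) $ i) \<le> max (absK (v $ i)) (absK (w $ i))" using abs_ultra by simp
  also have "\<dots> \<le> max (N v) (N w)" using N_ge[of v i] N_ge[of w i] by (rule max.mono)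
  finally show "absK ((v + w) $ i) \<le> max (N v) (N w)" .
qed

lemma N_minus[simp]: "N (- v) = N v"
  unfolding normK_def by simp

lemma N_diff_comm: "N (v - w) = N (w - v)"
  by (metis N_minus minus_diff_eq)

lemma N_ultra_diff: "N (v - w) \<le> max (N v) (N w)"
  using N_ultra[of v "-w"] by simp

lemma N_scale: "N (c *s v) = absK c * N v"
proof (rule antisym)
  show "N (c *s v) \<le> absK c * N v" unfolding N_le_iff
    using N_ge[of v] abs_nonneg[of c] by (simp add: abs_mult mult_left_mono)
  obtain i where "N v = absK (v $ i)" using N_attained by blast
  then have "absK c * N v = absK ((c *s v) $ i)" by (simp add: abs_mult)
  then show "absK c * N v \<le> N (c *s v)" using N_ge[of "c *s v" i] by simp
qed

lemma N_strict: assumes "N w < N v" shows "N (v + w) = N v"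
proof -
  have "N (v + w) \<le> N v" using N_ultra[of v w] assms by simp
  moreover have "N v \<le> max (N (v + w)) (N w)" using N_ultra[of "v+w" "-w"] by simp
  ultimately show ?thesis using assms by linarith
qed

lemma N_val: assumes "v \<noteq> 0" shows "\<exists>k::int. N v = real q powr k"
proof -
  obtain i where i: "N v = absK (v $ i)" using N_attained by blast
  then have "v $ i \<noteq> 0" using assms by auto
  then show ?thesis using abs_val i by auto
qed

lemma pow_le_iff: assumes "t > 0" shows "real q powr real_of_int k \<le> t \<longleftrightarrow> k \<le> \<lfloor>log (real q) t\<rfloor>"
proof -
  have "real q powr real_of_int k \<le> t \<longleftrightarrow> real_of_int k \<le> log (real q) t"
    using le_log_iff[OF q_gt1 assms] by simp
  also have "\<dots> \<longleftrightarrow> k \<le> \<lfloor>log (real q) t\<rfloor>" by (simp add: le_floor_iff)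
  finally show ?thesis .
qed

lemma N_le_floor: assumes "t > 0" shows "N v \<le> t \<longleftrightarrow> N v \<le> real q powr \<lfloor>log (real q) t\<rfloor>"
proof (cases "v = 0")
  case True then show ?thesis using assms q_pos by simp
next
  case False
  then obtain k :: int where k: "N v = real q powr k" using N_val by blast
  have "real q powr real_of_int k \<le> real q powr real_of_int \<lfloor>log (real q) t\<rfloor> \<longleftrightarrow> k \<le> \<lfloor>log (real q) t\<rfloor>"
    using powr_le_cancel_iff[OF q_gt1] by (metis of_int_le_iff)
  then show ?thesis using k pow_le_iff[OF assms, of k] by simp
qed

definition cb :: "'k ^ 'n \<Rightarrow> real \<Rightarrow> ('k ^ 'n) set" where
  "cb a r = {y. N (y - a) \<le> r}"

lemma cb_recentre: assumes "c \<in> cb a r" shows "cb a r = cb c r"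
proof -
  have 1: "N (a - c) \<le> r" using assms by (simp add: cb_def N_diff_comm)
  have "N (y - c) \<le> r \<longleftrightarrow> N (y - a) \<le> r" for y
  proof
    assume "N (y - c) \<le> r"
    then show "N (y - a) \<le> r" using N_ultra[of "y - c" "c - a"] assms by (simp add: cb_def)
  next
    assume "N (y - a) \<le> r"
    then show "N (y - c) \<le> r" using N_ultra[of "y - a" "a - c"] 1 by simp
  qed
  then show ?thesis by (auto simp: cb_def)
qed

lemma cb_translate: "cb a r = (+) a ` cb 0 r"
proof -
  have "y \<in> (+) a ` cb 0 r" if "y \<in> cb a r" for y
    using that by (intro image_eqI[of _ _ "y - a"]) (auto simp: cb_def)
  then show ?thesis by (auto simp: cb_def)
qed

lemma cb_floor: "t > 0 \<Longrightarrow> cb a t = cb a (real q powr \<lfloor>log (real q) t\<rfloor>)"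
  unfolding cb_def using N_le_floor by blast

lemma cb_empty: "r < 0 \<Longrightarrow> cb a r = {}"
  proof -
  assume r: "r < 0"
  have "\<not> N (y - a) \<le> r" for y using N_nonneg[of "y - a"] r by linarith
  then show ?thesis unfolding cb_def by blast
qed

lemma cb_single: "cb a 0 = {a}"
  proof -
  have "N (y - a) \<le> 0 \<longleftrightarrow> y = a" for y using N_nonneg[of "y - a"] N_zero_iff[of "y - a"] by auto
  then show ?thesis unfolding cb_def by blast
qed

end

context KF begin

definition "repf C = (SOME x. x \<in> C)"
definition "Rep = repf ` (Ok // Rk)"

lemma repf_in: "C \<in> Ok // Rk \<Longrightarrow> repf C \<in> C"
proof -
  assume "C \<in> Ok // Rk"
  then obtain x where "x \<in> C" using in_quotient_imp_non_empty[OF equiv_RR] by blast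
  then show "repf C \<in> C" unfolding repf_def by (rule someI)
qed

lemma Rep_finite: "finite Rep" unfolding Rep_def using quot_finite by simp

lemma Rep_card: "card Rep = q"
proof -
  have "inj_on repf (Ok // Rk)"
  proof (rule inj_onI)
    fix X Y assume X: "X \<in> Ok // Rk" and Y: "Y \<in> Ok // Rk" and e: "repf X = repf Y"
    have "repf X \<in> X \<inter> Y" using repf_in[OF X] repf_in[OF Y] e by simp
    then have "X \<inter> Y \<noteq> {}" by (metis empty_iff)
    then show "X = Y" using quotient_disj[OF equiv_RR X Y] by (metis (no_types))
  qed
  then have "card Rep = card (Ok // Rk)" unfolding Rep_def by (rule card_image)
  then show ?thesis using quot_card by simp
qed

lemma Rep_Ok: "\<rho> \<in> Rep \<Longrightarrow> absK \<rho> \<le> 1"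
  unfolding Rep_def using repf_in in_quotient_imp_subset[OF equiv_RR] by (auto simp: Ok_def)

lemma Rep_exists: assumes "absK x \<le> 1" shows "\<exists>\<rho>\<in>Rep. absK (x - \<rho>) < 1"
proof -
  have C: "Rk `` {x} \<in> Ok // Rk" using assms by (auto intro!: quotientI simp: Ok_def)
  have "x \<in> Rk `` {x}" using equiv_class_self[OF equiv_RR] assms by (auto simp: Ok_def)
  then have "(x, repf (Rk `` {x})) \<in> Rk"
    using quotient_eq_iff[OF equiv_RR C C] repf_in[OF C] by blast
  then show ?thesis using C unfolding Rep_def Rk_def by auto
qed

lemma Rep_unique: assumes "\<rho>1 \<in> Rep" "\<rho>2 \<in> Rep" "absK (\<rho>1 - \<rho>2) < 1" shows "\<rho>1 = \<rho>2"
proof -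
  obtain X Y where X: "X \<in> Ok // Rk" "\<rho>1 = repf X" and Y: "Y \<in> Ok // Rk" "\<rho>2 = repf Y"
    using assms unfolding Rep_def by blast
  have "(\<rho>1, \<rho>2) \<in> Rk" using assms Rep_Ok unfolding Rk_def by auto
  then have "X = Y" using quotient_eq_iff[OF equiv_RR X(1) Y(1)] repf_in X Y by blast
  then show ?thesis using X Y by simp
qed

definition "Vr = {v :: 'k ^ 'n. \<forall>i. v $ i \<in> Rep}"

lemma Vr_card: "card (Vr :: ('k ^ 'n) set) = q ^ CARD('n)" and Vr_finite: "finite (Vr :: ('k ^ 'n) set)"
proof -
  have b: "bij_betw vec_nth (Vr :: ('k ^ 'n) set) (PiE UNIV (\<lambda>_. Rep))"
    by (intro bij_betwI[of _ _ _ vec_lambda]) (auto simp: Vr_def vec_eq_iff PiE_def extensional_def)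
  have "card (PiE (UNIV :: 'n set) (\<lambda>_. Rep)) = q ^ CARD('n)"
    by (simp add: card_PiE Rep_card)
  then show "card (Vr :: ('k ^ 'n) set) = q ^ CARD('n)" using bij_betw_same_card[OF b] by simp
  have "finite (PiE (UNIV :: 'n set) (\<lambda>_. Rep))" using Rep_finite by (simp add: finite_PiE)
  then show "finite (Vr :: ('k ^ 'n) set)" using bij_betw_finite[OF b] by simp
qed

lemma Vr_N: "v \<in> Vr \<Longrightarrow> N v \<le> 1"
  unfolding Vr_def N_le_iff using Rep_Ok by blast

lemma Vr_exists: assumes "N w \<le> 1" shows "\<exists>v\<in>Vr. N (w - v) \<le> real q powr (-1)"
proof -
  have "\<forall>i. \<exists>\<rho>\<in>Rep. absK (w $ i - \<rho>) < 1" using assms Rep_exists N_le_iff by blast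
  then obtain f where f: "\<forall>i. f i \<in> Rep \<and> absK (w $ i - f i) < 1" by metis
  define v where "v = (\<chi> i. f i)"
  have "v \<in> Vr" using f by (simp add: v_def Vr_def)
  moreover have "N (w - v) \<le> real q powr (-1)" unfolding N_le_iff using f abs_lt1 by (simp add: v_def)
  ultimately show ?thesis by blast
qed

lemma Vr_unique: assumes "v1 \<in> Vr" "v2 \<in> Vr" "N (v1 - v2) < 1" shows "v1 = v2"
proof -
  have "\<forall>i. absK (v1 $ i - v2 $ i) < 1" 
  proof
    fix i show "absK (v1 $ i - v2 $ i) < 1" using N_ge[of "v1 - v2" i] assms(3) by simp
  qed
  then show ?thesis using assms Rep_unique unfolding Vr_def by (simp add: vec_eq_iff)
qed

end

context KF begin

abbreviation pk :: "int \<Rightarrow> real" where "pk k \<equiv> real q powr real_of_int k"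

lemma pk_pos: "pk k > 0" using q_pos by simp

lemma pk_succ: "pk (k + 1) = real q * pk k"
proof -
  have "pk (k + 1) = real q powr (real_of_int k + 1)" by simp
  also have "\<dots> = pk k * real q" using q_pos by (simp add: powr_add)
  finally show ?thesis by simp
qed

lemma inv_q: "real q powr (-1) = 1 / real q" using q_pos by (simp add: powr_minus_divide)

lemma decomp:
  assumes c: "absK c = pk (k + 1)"
  shows "cb 0 (pk (k + 1)) = (\<Union>v\<in>Vr. cb (c *s v) (pk k))"
proof (intro equalityI subsetI)
  fix w :: "'k ^ 'n" assume "w \<in> cb 0 (pk (k + 1))"
  then have w: "N w \<le> pk (k + 1)" by (simp add: cb_def)
  have c0: "c \<noteq> 0" using c pk_pos[of "k+1"] by (metis abs_zero less_irrefl)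
  define w' where "w' = inverse c *s w"
  have "N w' = N w / pk (k + 1)" unfolding w'_def N_scale abs_inverse c by simp
  then have "N w' \<le> 1" using w pk_pos[of "k+1"] by (simp add: divide_le_eq_1)
  then obtain v where v: "v \<in> Vr" "N (w' - v) \<le> real q powr (-1)" using Vr_exists by blast
  have "c *s w' = w" unfolding w'_def vector_smult_assoc using c0 by simp
  then have eq: "w - c *s v = c *s (w' - v)" by (simp add: vector_ssub_ldistrib)
  have "N (w - c *s v) = pk (k + 1) * N (w' - v)" unfolding eq N_scale c ..
  also have "\<dots> \<le> pk (k + 1) * real q powr (-1)" using v(2) pk_pos[of "k+1"] by (intro mult_left_mono) auto
  also have "\<dots> = pk k" unfolding pk_succ inv_q using q_pos by simp
  finally show "w \<in> (\<Union>v\<in>Vr. cb (c *s v) (pk k))" using v(1) by (auto simp: cb_def)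
next
  fix w :: "'k ^ 'n" assume "w \<in> (\<Union>v\<in>Vr. cb (c *s v) (pk k))"
  then obtain v where v: "v \<in> Vr" "N (w - c *s v) \<le> pk k" by (auto simp: cb_def)
  have "N (c *s v) \<le> pk (k + 1)" using Vr_N[OF v(1)] pk_pos[of "k+1"] by (simp add: N_scale c mult_left_le)
  moreover have "pk k \<le> pk (k + 1)" using q_gt1 by (intro powr_mono) auto
  moreover have "w = (w - c *s v) + c *s v" by simp
  ultimately have "N w \<le> pk (k + 1)" using N_ultra[of "w - c *s v" "c *s v"] v(2) by simp
  then show "w \<in> cb 0 (pk (k + 1))" by (simp add: cb_def)
qed

lemma decomp_disj:
  assumes c: "absK c = pk (k + 1)"
  shows "disjoint_family_on (\<lambda>v. cb (c *s v) (pk k)) Vr"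
unfolding disjoint_family_on_def
proof (intro ballI impI)
  fix v1 v2 :: "'k ^ 'n" assume v: "v1 \<in> Vr" "v2 \<in> Vr" "v1 \<noteq> v2"
  show "cb (c *s v1) (pk k) \<inter> cb (c *s v2) (pk k) = {}"
  proof (rule ccontr)
    assume "cb (c *s v1) (pk k) \<inter> cb (c *s v2) (pk k) \<noteq> {}"
    then obtain w where w: "N (w - c *s v1) \<le> pk k" "N (w - c *s v2) \<le> pk k" by (auto simp: cb_def)
    have eq: "c *s (v1 - v2) = (w - c *s v2) - (w - c *s v1)" by (simp add: vector_ssub_ldistrib)
    have "N ((w - c *s v2) - (w - c *s v1)) \<le> pk k" using N_ultra_diff[of "w - c *s v2" "w - c *s v1"] w by linarith
    then have "N (c *s (v1 - v2)) \<le> pk k" unfolding eq .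
    then have "real q * pk k * N (v1 - v2) \<le> pk k" unfolding N_scale c pk_succ .
    then have "pk k * (real q * N (v1 - v2)) \<le> pk k * 1" by (simp add: mult_ac)
    then have "real q * N (v1 - v2) \<le> 1" using pk_pos[of k] by (simp only: mult_le_cancel_left_pos)
    moreover have "N (v1 - v2) < real q * N (v1 - v2) \<or> N (v1 - v2) = 0"
    proof (cases "N (v1 - v2) = 0")
      case False
      then have "N (v1 - v2) > 0" using N_nonneg[of "v1 - v2"] by linarith
      then show ?thesis using q_gt1 by simp
    qed simp
    ultimately have "N (v1 - v2) < 1" by linarith
    then show False using Vr_unique v by blast
  qed
qed

end

locale KM = KF absK q for absK :: "'k::field \<Rightarrow> real" and q +
  fixes M :: "('k ^ 'n::finite) measure" and d :: nat
  assumes haar: "haar_Kn absK M" and d_def: "d = CARD('n)"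
begin

definition "Ecb = {cb a r | a r. True}"

lemma space_M[simp]: "space M = UNIV" using haar unfolding haar_Kn_def by blast
lemma sets_M: "sets M = sigma_sets UNIV Ecb"
  using haar unfolding haar_Kn_def Ecb_def cb_def by blast
lemma transl: "A \<in> sets M \<Longrightarrow> emeasure M ((+) a ` A) = emeasure M A"
  using haar unfolding haar_Kn_def by blast
lemma unit_ball: "emeasure M (cb 0 1) = 1"
  using haar unfolding haar_Kn_def cb_def by simp

lemma cb_sets[measurable]: "cb a r \<in> sets M"
  unfolding sets_M Ecb_def by (rule sigma_sets.Basic) blast

lemma cb_meas_transl: "emeasure M (cb a r) = emeasure M (cb 0 r)"
  using transl[OF cb_sets[of 0 r], of a] cb_translate[of a r] by simp

lemma step: "emeasure M (cb 0 (pk (k + 1))) = of_nat (q ^ CARD('n)) * emeasure M (cb 0 (pk k))"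
proof -
  obtain c where c: "c \<noteq> 0" "absK c = pk (k + 1)" using abs_exists by blast
  have "emeasure M (cb 0 (pk (k + 1))) = emeasure M (\<Union>v\<in>Vr. cb (c *s v) (pk k))"
    by (subst decomp[OF c(2)]) (rule refl)
  also have "\<dots> = (\<Sum>v\<in>Vr. emeasure M (cb (c *s v) (pk k)))"
  proof -
    have "(\<lambda>v. cb (c *s v) (pk k)) ` Vr \<subseteq> sets M" using cb_sets by blast
    from sum_emeasure[of "\<lambda>v. cb (c *s v) (pk k)" Vr M, OF this decomp_disj[OF c(2)] Vr_finite]
    show ?thesis by simp
  qed
  also have "\<dots> = (\<Sum>v\<in>(Vr :: ('k ^ 'n) set). emeasure M (cb 0 (pk k)))"
    by (intro sum.cong refl cb_meas_transl)
  also have "\<dots> = of_nat (q ^ CARD('n)) * emeasure M (cb 0 (pk k))"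
    using Vr_card[where 'n='n] by simp
  finally show ?thesis .
qed

end

context KF begin
lemma pk_le_iff: "pk j \<le> pk k \<longleftrightarrow> j \<le> k"
  using powr_le_cancel_iff[OF q_gt1] by (metis of_int_le_iff)
lemma pk_less_iff: "pk j < pk k \<longleftrightarrow> j < k"
  using powr_less_cancel_iff[OF q_gt1] by (metis of_int_less_iff)
lemma pk_inj: "pk j = pk k \<longleftrightarrow> j = k"
proof
  assume "pk j = pk k"
  then have "pk j \<le> pk k" "pk k \<le> pk j" by simp_all
  then show "j = k" unfolding pk_le_iff by simp
qed simp
end

context KM begin

definition Vol :: "int \<Rightarrow> real" where "Vol k = real q powr (real_of_int k * real d)"

lemma step': "emeasure M (cb 0 (pk (k + 1))) = of_nat (q ^ d) * emeasure M (cb 0 (pk k))"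
  using step d_def by simp

lemma d_pos: "d > 0" using d_def by simp

lemma Vol_pos: "Vol k > 0" unfolding Vol_def using q_pos by simp

lemma Vol_succ: "Vol (k + 1) = real q ^ d * Vol k"
proof -
  have "Vol (k + 1) = real q powr (real_of_int k * real d + real d)" unfolding Vol_def by (simp add: algebra_simps)
  also have "\<dots> = real q powr real d * Vol k" unfolding Vol_def using q_pos by (simp add: powr_add)
  also have "real q powr real d = real q ^ d" using q_pos by (simp add: powr_realpow)
  finally show ?thesis .
qed

lemma ball0_meas: "emeasure M (cb 0 (pk k)) = ennreal (Vol k)"
proof (induction k rule: int_induct[where k=0])
  case base
  then show ?case using unit_ball q_pos by (simp add: Vol_def)
next
  case (step1 i)
  have "emeasure M (cb 0 (pk (i + 1))) = of_nat (q ^ d) * ennreal (Vol i)" using step' step1 by simp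
  also have "\<dots> = ennreal (real q ^ d * Vol i)"
    using Vol_pos[of i] Vol_pos[of "i - 1"] by (simp add: ennreal_of_nat_eq_real_of_nat ennreal_mult)
  finally show ?case by (simp add: Vol_succ)
next
  case (step2 i)
  have h: "emeasure M (cb 0 (pk i)) = of_nat (q ^ d) * emeasure M (cb 0 (pk (i - 1)))"
    using step'[of "i - 1"] by simp
  have "of_nat (q ^ d) * emeasure M (cb 0 (pk (i - 1))) = of_nat (q ^ d) * ennreal (Vol (i - 1))"
  proof -
    have "ennreal (Vol i) = ennreal (real q ^ d * Vol (i - 1))" using Vol_succ[of "i - 1"] by simp
    also have "\<dots> = of_nat (q ^ d) * ennreal (Vol (i - 1))"
      using Vol_pos[of i] Vol_pos[of "i - 1"] by (simp add: ennreal_of_nat_eq_real_of_nat ennreal_mult)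
    finally show ?thesis using h step2 by simp
  qed
  moreover have "(of_nat (q ^ d) :: ennreal) \<noteq> 0" "(of_nat (q ^ d) :: ennreal) \<noteq> top"
    using q_ge2 by (simp_all add: ennreal_of_nat_eq_real_of_nat)
  ultimately show ?case using ennreal_mult_cancel_left by metis
qed

lemma ball_meas: "emeasure M (cb a (pk k)) = ennreal (Vol k)"
  using ball0_meas[of k] cb_meas_transl[of a "pk k"] by simp

lemma ball_meas_pos: "t > 0 \<Longrightarrow> emeasure M (cb a t) = ennreal (Vol \<lfloor>log (real q) t\<rfloor>)"
  using cb_floor ball_meas by metis

lemma Vol_small: assumes "e > 0" shows "\<exists>k. Vol k < e"
proof -
  have "real d > 0" using d_pos by simp
  have "real_of_int (\<lfloor>log (real q) e / real d\<rfloor> - 1) < log (real q) e / real d"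
    using of_int_floor_le[of "log (real q) e / real d"] by linarith
  then obtain k :: int where k: "k < log (real q) e / real d" by blast
  then have "real_of_int k * real d < log (real q) e" using \<open>real d > 0\<close> by (simp add: pos_less_divide_eq)
  then have "Vol k < real q powr (log (real q) e)" unfolding Vol_def using q_gt1 by simp
  also have "\<dots> = e" using q_gt1 assms by simp
  finally show ?thesis by blast
qed

lemma single_null: "emeasure M {a} = 0"
proof -
  have "emeasure M {a} \<le> 0 + ennreal e" if e: "e > 0" for e
  proof -
    obtain k where k: "Vol k < e" using Vol_small e by blast
    have "{a} \<subseteq> cb a (pk k)" using pk_pos[of k] by (simp add: cb_def)
    then have "emeasure M {a} \<le> ennreal (Vol k)" using emeasure_mono[of "{a}" "cb a (pk k)" M] ball_meas by simp
    also have "\<dots> \<le> ennreal e" using k by (intro ennreal_leI) simp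
    finally show ?thesis by simp
  qed
  then have "emeasure M {a} \<le> 0" by (rule ennreal_le_epsilon)
  then show ?thesis by simp
qed

lemma single_sets[measurable]: "{a} \<in> sets M" using cb_sets[of a 0] unfolding cb_single .

lemma single_nullset: "{a} \<in> null_sets M" using single_null single_sets by (simp add: null_sets_def)

lemma AE_ne: "AE w in M. w \<noteq> a"
  using AE_not_in[OF single_nullset[of a]] by simp

lemma Int_stable_Ecb: "Int_stable (Ecb :: ('k ^ 'n) set set)"
  unfolding Int_stable_def
proof (intro ballI)
  fix X Y :: "('k ^ 'n) set" assume "X \<in> Ecb" "Y \<in> Ecb"
  then obtain a r b t where XY: "X = cb a r" "Y = cb b t" unfolding Ecb_def by blast
  have "\<exists>c s. cb a r \<inter> cb b t = cb c s"
  proof (cases "cb a r \<inter> cb b t = {}")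
    case True then show ?thesis using cb_empty[of "-1" a] by auto
  next
    case False
    then obtain c where c: "c \<in> cb a r" "c \<in> cb b t" by blast
    have "cb a r \<inter> cb b t = cb c r \<inter> cb c t" using cb_recentre c by metis
    also have "\<dots> = cb c (min r t)" by (auto simp: cb_def)
    finally show ?thesis by blast
  qed
  then show "X \<inter> Y \<in> Ecb" unfolding XY Ecb_def by blast
qed

lemma N_meas[measurable]: "(\<lambda>w. N (w - a)) \<in> borel_measurable M"
proof -
  have "{w \<in> space M. N (w - a) \<le> t} = cb a t" for t by (simp add: cb_def)
  then show ?thesis using cb_sets by (simp add: borel_measurable_iff_le)
qed

lemma N_meas0[measurable]: "N \<in> borel_measurable M"
  using N_meas[of 0] by simp

lemma N_meas'[measurable]: "(\<lambda>w. N (a - w)) \<in> borel_measurable M"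
  using N_meas[of a] by (simp add: N_diff_comm)

definition Sh :: "int \<Rightarrow> ('k ^ 'n) set" where "Sh k = {w. N w = pk k}"

lemma Sh_diff: "Sh k = cb 0 (pk k) - cb 0 (pk (k - 1))"
proof -
  have "N w = pk k \<longleftrightarrow> N w \<le> pk k \<and> \<not> N w \<le> pk (k - 1)" for w
  proof (cases "w = 0")
    case True then show ?thesis using pk_pos[of k] by auto
  next
    case False
    then obtain j where j: "N w = pk j" using N_val by blast
    show ?thesis unfolding j pk_le_iff pk_inj by auto
  qed
  then show ?thesis by (auto simp: Sh_def cb_def)
qed

lemma Sh_sets[measurable]: "Sh k \<in> sets M" unfolding Sh_diff by measurable

lemma Sh_emeasure: "emeasure M (Sh k) = ennreal (Vol k - Vol (k - 1))"
proof -
  have sub: "cb 0 (pk (k - 1)) \<subseteq> cb (0 :: 'k ^ 'n) (pk k)" using pk_le_iff[of "k - 1" k] by (auto simp: cb_def)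
  have "emeasure M (Sh k) = emeasure M (cb 0 (pk k)) - emeasure M (cb 0 (pk (k - 1)))"
    unfolding Sh_diff using ball_meas[of 0 "k - 1"] by (intro emeasure_Diff[OF _ cb_sets cb_sets sub]) simp
  also have "\<dots> = ennreal (Vol k - Vol (k - 1))" using ball_meas[of 0 "k - 1"] ball_meas[of 0 k] Vol_pos[of "k - 1"] by (simp add: ennreal_minus)
  finally show ?thesis .
qed

lemma Vol_pred: "Vol (k - 1) = Vol k / real q ^ d"
  using Vol_succ[of "k - 1"] q_pos by simp

lemma Sh_measure: "measure M (Sh k) = Vol k * (1 - 1 / real q ^ d)"
proof -
  have "Vol k - Vol (k - 1) \<ge> 0" using Vol_pred[of k] Vol_pos[of k] q_gt1
    by (simp add: divide_le_eq)
  then have "measure M (Sh k) = Vol k - Vol (k - 1)" using Sh_emeasure by (simp add: measure_def)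
  also have "\<dots> = Vol k * (1 - 1 / real q ^ d)" unfolding Vol_pred by (simp add: algebra_simps)
  finally show ?thesis .
qed

lemma Sh_finite: "emeasure M (Sh k) \<noteq> \<infinity>" using Sh_emeasure by simp

lemma Sh_disj: "j \<noteq> k \<Longrightarrow> Sh j \<inter> Sh k = {}" unfolding Sh_def using pk_inj by auto

lemma Sh_cover: "w \<noteq> 0 \<Longrightarrow> \<exists>k. w \<in> Sh k" unfolding Sh_def using N_val by blast

end

context KM begin

lemma Sh_ind_in: "integrable M (\<lambda>w. c * indicator (Sh k) w :: real)"
  using Sh_emeasure[of k] by (intro integrable_mult_right integrable_real_indicator) (auto simp: Sh_sets)

lemma shell_seq_single:
  assumes inj: "inj \<sigma>" and w: "w \<in> Sh (\<sigma> i0)"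
  shows "(\<lambda>i. \<phi> i * indicator (Sh (\<sigma> i)) w :: real) = (\<lambda>i. if i = i0 then \<phi> i0 else 0)"
proof
  fix i show "\<phi> i * indicator (Sh (\<sigma> i)) w = (if i = i0 then \<phi> i0 else 0)"
  proof (cases "i = i0")
    case False
    then have "\<sigma> i \<noteq> \<sigma> i0" using inj by (meson injD)
    then have "w \<notin> Sh (\<sigma> i)" using Sh_disj w by blast
    then show ?thesis using False by simp
  qed (use w in simp)
qed

lemma shell_sum_at:
  assumes inj: "inj \<sigma>" and w: "w \<in> Sh (\<sigma> i0)"
  shows "(\<Sum>i. \<phi> i * indicator (Sh (\<sigma> i)) w :: real) = \<phi> i0"
  unfolding shell_seq_single[OF inj w] using sums_single[of i0 "\<lambda>_. \<phi> i0"] sums_unique by (metis (no_types))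

lemma shell_sum_out:
  assumes "\<And>i. w \<notin> Sh (\<sigma> i)"
  shows "(\<Sum>i. \<phi> i * indicator (Sh (\<sigma> i)) w :: real) = 0"
  using assms by simp

lemma shell_summable_pt:
  assumes inj: "inj \<sigma>"
  shows "summable (\<lambda>i. norm (\<phi> i * indicator (Sh (\<sigma> i)) w :: real))"
proof (cases "\<exists>i0. w \<in> Sh (\<sigma> i0)")
  case True
  then obtain i0 where w: "w \<in> Sh (\<sigma> i0)" by blast
  have eq: "\<phi> i * indicator (Sh (\<sigma> i)) w = (if i = i0 then \<phi> i0 else 0)" for i
    using fun_cong[OF shell_seq_single[OF inj w, of \<phi>], of i] by simp
  show ?thesis by (rule summable_finite[of "{i0}"]) (auto simp: eq)
qed simp

lemma
  fixes \<phi> :: "nat \<Rightarrow> real" and \<sigma> :: "nat \<Rightarrow> int"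
  assumes inj: "inj \<sigma>" and summ: "summable (\<lambda>i. \<bar>\<phi> i\<bar> * measure M (Sh (\<sigma> i)))"
  shows shell_integrable: "integrable M (\<lambda>w. \<Sum>i. \<phi> i * indicator (Sh (\<sigma> i)) w)"
    and shell_integral: "(\<integral>w. (\<Sum>i. \<phi> i * indicator (Sh (\<sigma> i)) w) \<partial>M) = (\<Sum>i. \<phi> i * measure M (Sh (\<sigma> i)))"
proof -
  have i1: "\<And>i. integrable M (\<lambda>w. \<phi> i * indicator (Sh (\<sigma> i)) w)" by (rule Sh_ind_in)
  have i2: "AE w in M. summable (\<lambda>i. norm (\<phi> i * indicator (Sh (\<sigma> i)) w))"
    using shell_summable_pt[OF inj] by simp
  have e: "(\<integral>w. norm (\<phi> i * indicator (Sh (\<sigma> i)) w) \<partial>M) = \<bar>\<phi> i\<bar> * measure M (Sh (\<sigma> i))" for i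
  proof -
    have "(\<lambda>w. norm (\<phi> i * indicator (Sh (\<sigma> i)) w)) = (\<lambda>w. \<bar>\<phi> i\<bar> * indicator (Sh (\<sigma> i)) w)"
      by (auto simp: indicator_def)
    then show ?thesis by simp
  qed
  have i3: "summable (\<lambda>i. (\<integral>w. norm (\<phi> i * indicator (Sh (\<sigma> i)) w) \<partial>M))"
    unfolding e by (rule summ)
  show "integrable M (\<lambda>w. \<Sum>i. \<phi> i * indicator (Sh (\<sigma> i)) w)"
    by (rule integrable_suminf[OF i1 i2 i3])
  have "(\<integral>w. (\<Sum>i. \<phi> i * indicator (Sh (\<sigma> i)) w) \<partial>M) = (\<Sum>i. (\<integral>w. \<phi> i * indicator (Sh (\<sigma> i)) w \<partial>M))"
    by (rule integral_suminf[OF i1 i2 i3])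
  also have "\<dots> = (\<Sum>i. \<phi> i * measure M (Sh (\<sigma> i)))" by simp
  finally show "(\<integral>w. (\<Sum>i. \<phi> i * indicator (Sh (\<sigma> i)) w) \<partial>M) = (\<Sum>i. \<phi> i * measure M (Sh (\<sigma> i)))" .
qed

end

locale KL = KM absK q M d for absK :: "'k::field \<Rightarrow> real" and q and M :: "('k ^ 'n::finite) measure" and d +
  fixes absL :: "'l::field \<Rightarrow> real" and \<iota> :: "'k \<Rightarrow> 'l" and e :: "'n \<Rightarrow> 'l"
  assumes ucb: "unram_canonical_basis absK absL \<iota> e"
begin

lemmas ucb' = ucb[unfolded unram_canonical_basis_def]

lemma i_add: "\<iota> (a + b) = \<iota> a + \<iota> b" using conjunct1[OF ucb'] unfolding U_map_def by blast
lemma i_mult: "\<iota> (a * b) = \<iota> a * \<iota> b" using conjunct1[OF conjunct2[OF ucb']] unfolding U_map_def by blast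
lemma i_one[simp]: "\<iota> 1 = 1" using conjunct1[OF conjunct2[OF conjunct2[OF ucb']]] unfolding U_map_def by blast
lemma L_nonneg: "absL x \<ge> 0" using conjunct1[OF conjunct2[OF conjunct2[OF conjunct2[OF ucb']]]] unfolding U_map_def by blast
lemma L_zero_iff[simp]: "absL x = 0 \<longleftrightarrow> x = 0" using conjunct1[OF conjunct2[OF conjunct2[OF conjunct2[OF conjunct2[OF ucb']]]]] unfolding U_map_def by blast
lemma L_mult: "absL (x * y) = absL x * absL y" using conjunct1[OF conjunct2[OF conjunct2[OF conjunct2[OF conjunct2[OF conjunct2[OF ucb']]]]]] unfolding U_map_def by blast
lemma L_ultra: "absL (x + y) \<le> max (absL x) (absL y)" using conjunct1[OF conjunct2[OF conjunct2[OF conjunct2[OF conjunct2[OF conjunct2[OF conjunct2[OF ucb']]]]]]] unfolding U_map_def by blast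
lemma L_i[simp]: "absL (\<iota> a) = absK a" using conjunct1[OF conjunct2[OF conjunct2[OF conjunct2[OF conjunct2[OF conjunct2[OF conjunct2[OF conjunct2[OF ucb']]]]]]]] unfolding U_map_def by blast
lemma U_bij: "bij (U_map \<iota> e)" using conjunct1[OF conjunct2[OF conjunct2[OF conjunct2[OF conjunct2[OF conjunct2[OF conjunct2[OF conjunct2[OF conjunct2[OF ucb']]]]]]]]] unfolding U_map_def by blast
lemma e_le1: "absL (e i) \<le> 1" using conjunct1[OF conjunct2[OF conjunct2[OF conjunct2[OF conjunct2[OF conjunct2[OF conjunct2[OF conjunct2[OF conjunct2[OF conjunct2[OF ucb']]]]]]]]]] unfolding U_map_def by blast
lemma indep: "(\<forall>i. absK (a $ i) \<le> 1) \<Longrightarrow> absL (U_map \<iota> e a) < 1 \<Longrightarrow> absK (a $ i) < 1"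
  using conjunct2[OF conjunct2[OF conjunct2[OF conjunct2[OF conjunct2[OF conjunct2[OF conjunct2[OF conjunct2[OF conjunct2[OF conjunct2[OF conjunct2[OF ucb']]]]]]]]]]] unfolding U_map_def by blast

lemma i_zero[simp]: "\<iota> 0 = 0"
proof -
  have "\<iota> 0 + \<iota> 0 = \<iota> 0 + 0" using i_add[of 0 0] by simp
  then show ?thesis by (rule add_left_imp_eq)
qed

lemma L_zero[simp]: "absL 0 = 0" by simp

lemma i_minus: "\<iota> (- a) = - \<iota> a" using i_add[of a "-a"] by (metis add.commute eq_neg_iff_add_eq_0 i_zero add.right_inverse)

lemma L_minus[simp]: "absL (- y) = absL y"
proof -
  have "absL (-1 :: 'l) = 1" using L_i[of "-1"] i_minus[of 1] by simp
  then show ?thesis using L_mult[of "-1" y] by simp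
qed

lemma L_inverse: "absL (inverse x) = 1 / absL x"
proof (cases "x = 0")
  case False
  have "absL (1::'l) = 1" using L_i[of 1] by simp
  then have "absL (inverse x) * absL x = 1" using L_mult[of "inverse x" x] False by simp
  then show ?thesis by (simp add: eq_divide_eq)
qed simp

lemma L_sum_le: "finite S \<Longrightarrow> 0 \<le> t \<Longrightarrow> (\<forall>i\<in>S. absL (f i) \<le> t) \<Longrightarrow> absL (sum f S) \<le> t"
proof (induction S rule: finite_induct)
  case (insert x F)
  then have "absL (f x) \<le> t" "absL (sum f F) \<le> t" by simp_all
  then have "max (absL (f x)) (absL (sum f F)) \<le> t" by simp
  then have "absL (f x + sum f F) \<le> t" using L_ultra[of "f x" "sum f F"] by linarith
  then show ?case using insert(1,2) by simp
qed simp

abbreviation U where "U \<equiv> U_map \<iota> e"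
abbreviation J where "J \<equiv> J_map \<iota> e"

lemma U_add: "U (x + y) = U x + U y"
  unfolding U_map_def by (simp add: i_add distrib_right sum.distrib)

lemma U_zero[simp]: "U 0 = 0" unfolding U_map_def by simp

lemma U_minus: "U (- x) = - U x" using U_add[of x "-x"] by (metis add.commute eq_neg_iff_add_eq_0 U_zero add.right_inverse)

lemma U_diff: "U (x - y) = U x - U y" using U_add[of x "-y"] U_minus[of y] by simp

lemma U_scale: "U (c *s x) = \<iota> c * U x"
  unfolding U_map_def by (simp add: i_mult sum_distrib_left mult.assoc)

lemma L_U: "absL (U x) = N x"
proof (cases "x = 0")
  case False
  obtain j where j: "N x = absK (x $ j)" using N_attained by blast
  have xj: "x $ j \<noteq> 0" using j N_pos[OF False] by auto
  define a where "a = inverse (x $ j) *s x"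
  have ai: "absK (a $ i) \<le> 1" for i
  proof -
    have ae: "absK (a $ i) = absK (x $ i) / absK (x $ j)" by (simp add: a_def abs_mult abs_inverse)
    have p: "absK (x $ j) > 0" using xj abs_nonneg[of "x $ j"] abs_zero_iff[of "x $ j"] by linarith
    have "absK (x $ i) / absK (x $ j) \<le> 1" using N_ge[of x i] j p
      by (simp add: divide_le_eq_1)
    then show ?thesis using ae by simp
  qed
  have aj: "absK (a $ j) = 1" using xj by (simp add: a_def)
  have "absL (\<iota> (a $ i) * e i) \<le> 1" for i
    unfolding L_mult L_i using ai[of i] e_le1[of i] abs_nonneg[of "a $ i"] L_nonneg[of "e i"] by (intro mult_le_one) auto
  then have "absL (U a) \<le> 1" unfolding U_map_def
    by (intro L_sum_le) auto
  moreover have "\<not> absL (U a) < 1" using indep[of a j] ai aj by auto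
  ultimately have Ua: "absL (U a) = 1" by simp
  have "x = (x $ j) *s a" using xj by (simp add: a_def vector_smult_assoc)
  then have "U x = U ((x $ j) *s a)" by simp
  then have "U x = \<iota> (x $ j) * U a" unfolding U_scale .
  then show ?thesis using Ua j by (simp add: L_mult)
qed simp

lemma U_inj: "U x = U y \<Longrightarrow> x = y" using U_bij by (meson bij_def injD)

lemma U_J: "U (J x) = inverse (U x)"
  unfolding J_map_def using U_bij by (simp add: bij_def surj_f_inv_f)

lemma JJ[simp]: "J (J x) = x"
  by (rule U_inj) (simp add: U_J)

lemma J_zero[simp]: "J 0 = 0" by (rule U_inj) (simp add: U_J)

lemma J_eq0_iff[simp]: "J x = 0 \<longleftrightarrow> x = 0" by (metis JJ J_zero)

lemma N_J: "N (J x) = 1 / N x"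
  using L_U[of "J x"] L_U[of x] by (simp add: U_J L_inverse)

lemma N_J_diff: assumes "x \<noteq> 0" "w \<noteq> 0" shows "N (J x - J w) = N (x - w) / (N x * N w)"
proof -
  have ux: "U x \<noteq> 0" "U w \<noteq> 0" using assms U_inj[of _ 0] by auto
  have "U (J x - J w) = inverse (U x) - inverse (U w)" by (simp add: U_diff U_J)
  also have "\<dots> = - (inverse (U x) * (U x - U w) * inverse (U w))" using ux by (rule inverse_diff_inverse)
  finally have "absL (U (J x - J w)) = absL (U x - U w) / (absL (U x) * absL (U w))"
    by (simp add: L_mult L_inverse)
  then show ?thesis by (simp add: L_U U_diff[symmetric])
qed

end

context KL begin

lemma J_pre_far:
  assumes r: "0 \<le> r" "r < N a"
  shows "J -` cb a r = cb (J a) (r / (N a)^2)"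
proof -
  have a0: "a \<noteq> 0" using r by auto
  have Na: "N a > 0" using N_pos[OF a0] .
  have NJa: "N (J a) = 1 / N a" by (rule N_J)
  have "N (J w - a) \<le> r \<longleftrightarrow> N (w - J a) \<le> r / (N a)^2" for w
  proof
    assume h: "N (J w - a) \<le> r"
    have "N (a + (J w - a)) = N a" using h r by (intro N_strict) simp
    then have NJw: "N (J w) = N a" by simp
    then have w0: "w \<noteq> 0" using Na by auto
    have Nw: "N w = 1 / N a" using N_J[of "J w"] NJw by simp
    have "N (w - J a) = N (J (J w) - J a)" by simp
    also have "\<dots> = N (J w - a) / (N (J w) * N a)" using N_J_diff[of "J w" a] w0 a0 by simp
    also have "\<dots> = N (J w - a) / (N a)^2" using NJw by (simp add: power2_eq_square)
    also have "\<dots> \<le> r / (N a)^2" using h Na by (simp add: divide_right_mono)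
    finally show "N (w - J a) \<le> r / (N a)^2" .
  next
    assume h: "N (w - J a) \<le> r / (N a)^2"
    have "r / (N a)^2 < 1 / N a" using r Na by (simp add: power2_eq_square divide_simps)
    then have "N (w - J a) < N (J a)" using h NJa by simp
    then have "N (J a + (w - J a)) = N (J a)" by (rule N_strict)
    then have Nw: "N w = 1 / N a" using NJa by simp
    then have w0: "w \<noteq> 0" using Na by auto
    have "N (J w - a) = N (J w - J (J a))" by simp
    also have "\<dots> = N (w - J a) / (N w * N (J a))" using N_J_diff[of w "J a"] w0 a0 by simp
    also have "\<dots> = N (w - J a) * (N a)^2" using Nw NJa Na by (simp add: power2_eq_square)
    also have "\<dots> \<le> r" using h pos_le_divide_eq[of "(N a)^2" "N (w - J a)" r] Na a0 by simp
    finally show "N (J w - a) \<le> r" .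
  qed
  then show ?thesis by (auto simp: cb_def)
qed

lemma J_pre_near:
  assumes r: "0 < r" "N a \<le> r"
  shows "J -` cb a r = {0} \<union> {w. 1 / r \<le> N w}"
proof -
  have "0 \<in> cb a r" using r by (simp add: cb_def N_diff_comm)
  then have e: "cb a r = cb 0 r" by (rule cb_recentre)
  have "N (J w) \<le> r \<longleftrightarrow> w = 0 \<or> 1 / r \<le> N w" for w
  proof (cases "w = 0")
    case False
    then have "N w > 0" by (rule N_pos)
    then show ?thesis using r False by (simp add: N_J divide_simps mult.commute)
  qed (use r in simp)
  then show ?thesis unfolding e by (auto simp: cb_def)
qed

lemma J_pre_neg: "r < 0 \<Longrightarrow> J -` cb a r = {}" using cb_empty[of r a] by simp

lemma J_pre_zero: "J -` cb a 0 = {J a}"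
proof -
  have "J w = a \<longleftrightarrow> w = J a" for w by (metis JJ)
  then show ?thesis unfolding cb_single by auto
qed

lemma ge_sets[measurable]: "{w. t \<le> N w} \<in> sets M"
proof -
  have "{w \<in> space M. t \<le> N w} \<in> sets M" by measurable
  then show ?thesis by simp
qed

lemma J_meas[measurable]: "J \<in> measurable M M"
proof (rule measurable_sigma_sets[OF sets_M])
  show "Ecb \<subseteq> Pow UNIV" by simp
  show "J \<in> space M \<rightarrow> UNIV" by simp
  fix X :: "('k ^ 'n) set" assume "X \<in> Ecb"
  then obtain a r where X: "X = cb a r" unfolding Ecb_def by blast
  have "J -` cb a r \<in> sets M"
  proof (cases "r < 0")
    case True then show ?thesis using J_pre_neg by simp
  next
    case False
    show ?thesis
    proof (cases "r = 0")
      case True then show ?thesis using J_pre_zero by simp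
    next
      case r0: False
      show ?thesis
      proof (cases "r < N a")
        case True then show ?thesis using J_pre_far[of r a] False by simp
      next
        case False
        have "{0} \<union> {w. 1 / r \<le> N w} \<in> sets M" using single_sets ge_sets by (rule sets.Un)
        then show ?thesis using J_pre_near[of r a] r0 \<open>\<not> r < 0\<close> False by simp
      qed
    qed
  qed
  then show "J -` X \<inter> space M \<in> sets M" using X by simp
qed

definition \<rho> :: "'k ^ 'n \<Rightarrow> real" where "\<rho> w = N w powr (- 2 * real d)"

lemma \<rho>_meas[measurable]: "\<rho> \<in> borel_measurable M" unfolding \<rho>_def by measurable

lemma \<rho>_nonneg: "\<rho> w \<ge> 0" unfolding \<rho>_def by simp

lemma \<rho>_zero[simp]: "\<rho> 0 = 0" unfolding \<rho>_def by simp

definition "D = density M (\<lambda>w. ennreal (\<rho> w))"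

lemma sets_D[simp]: "sets D = sets M" unfolding D_def by simp
lemma space_D[simp]: "space D = UNIV" unfolding D_def by simp

lemma emeasure_D: "A \<in> sets M \<Longrightarrow> emeasure D A = (\<integral>\<^sup>+ w. ennreal (\<rho> w) * indicator A w \<partial>M)"
  unfolding D_def by (simp add: emeasure_density)

end

context KL begin

definition cq :: real where "cq = real q powr (- real d)"

lemma cq_pos: "cq > 0" unfolding cq_def using q_pos by simp
lemma cq_lt1: "cq < 1"
proof -
  have "real q powr (- real d) < real q powr 0" using q_gt1 d_pos by (subst powr_less_cancel_iff) auto
  then show ?thesis unfolding cq_def using q_pos by simp
qed
lemma cq_eq: "1 / real q ^ d = cq"
  unfolding cq_def using q_pos by (simp add: powr_minus_divide powr_realpow)

lemma Sh_measure': "measure M (Sh k) = Vol k * (1 - cq)"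
  using Sh_measure cq_eq by simp

lemma Vol_add: "Vol (j + k) = Vol j * Vol k"
  unfolding Vol_def using q_pos by (simp add: distrib_right powr_add)

lemma Vol_nat: "Vol (- int i) = cq ^ i"
  unfolding Vol_def cq_def using q_pos by (simp add: powr_power mult_ac)

lemma pk_powr: "pk j powr (- 2 * real d) = Vol (- 2 * j)"
  unfolding Vol_def using q_pos by (simp add: powr_powr mult_ac)

lemma geo_shell:
  fixes K0 :: int
  defines "\<sigma> \<equiv> \<lambda>i::nat. K0 + int i"
  shows "(\<lambda>i. pk (\<sigma> i) powr (- 2 * real d) * measure M (Sh (\<sigma> i))) sums Vol (- K0)"
    and "summable (\<lambda>i. \<bar>pk (\<sigma> i) powr (- 2 * real d)\<bar> * measure M (Sh (\<sigma> i)))"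
proof -
  have t: "pk (\<sigma> i) powr (- 2 * real d) * measure M (Sh (\<sigma> i)) = ((1 - cq) * Vol (- K0)) * cq ^ i" for i
  proof -
    have "pk (\<sigma> i) powr (- 2 * real d) * measure M (Sh (\<sigma> i)) = Vol (- 2 * \<sigma> i) * Vol (\<sigma> i) * (1 - cq)"
      unfolding pk_powr Sh_measure' by simp
    also have "Vol (- 2 * \<sigma> i) * Vol (\<sigma> i) = Vol (- K0) * Vol (- int i)"
      unfolding Vol_add[symmetric] \<sigma>_def by (simp add: algebra_simps)
    finally show ?thesis unfolding Vol_nat by (simp add: mult_ac)
  qed
  have "(\<lambda>i. ((1 - cq) * Vol (- K0)) * cq ^ i) sums (((1 - cq) * Vol (- K0)) * (1 / (1 - cq)))"
    using cq_pos cq_lt1 by (intro sums_mult geometric_sums) simp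
  moreover have "((1 - cq) * Vol (- K0)) * (1 / (1 - cq)) = Vol (- K0)" using cq_lt1 by simp
  ultimately show s: "(\<lambda>i. pk (\<sigma> i) powr (- 2 * real d) * measure M (Sh (\<sigma> i))) sums Vol (- K0)"
    unfolding t by simp
  have "\<bar>pk (\<sigma> i) powr (- 2 * real d)\<bar> * measure M (Sh (\<sigma> i)) = pk (\<sigma> i) powr (- 2 * real d) * measure M (Sh (\<sigma> i))" for i
    by simp
  then show "summable (\<lambda>i. \<bar>pk (\<sigma> i) powr (- 2 * real d)\<bar> * measure M (Sh (\<sigma> i)))"
    using s sums_summable by simp
qed

lemma inv_le_pk: assumes "r > 0" shows "1 / r \<le> pk m \<longleftrightarrow> - \<lfloor>log (real q) r\<rfloor> \<le> m"
proof -
  have e1: "pk (- m) = 1 / pk m" using q_pos by (simp add: powr_minus_divide)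
  have P: "pk m > 0" by (rule pk_pos)
  have "1 / r \<le> pk m \<longleftrightarrow> 1 \<le> pk m * r" using assms by (simp add: divide_le_eq)
  also have "\<dots> \<longleftrightarrow> 1 / pk m \<le> r" using P by (simp add: divide_le_eq mult.commute)
  finally have "1 / r \<le> pk m \<longleftrightarrow> pk (- m) \<le> r" unfolding e1 .
  also have "\<dots> \<longleftrightarrow> - m \<le> \<lfloor>log (real q) r\<rfloor>" by (rule pow_le_iff[OF assms])
  finally show ?thesis by linarith
qed

lemma rho_ge_shell:
  assumes r: "r > 0"
  defines "K0 \<equiv> - \<lfloor>log (real q) r\<rfloor>"
  shows "\<rho> w * indicator {w. 1 / r \<le> N w} w = (\<Sum>i. pk (K0 + int i) powr (- 2 * real d) * indicator (Sh (K0 + int i)) w)"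
proof -
  have inj: "inj (\<lambda>i::nat. K0 + int i)" by (rule injI) simp
  show ?thesis
  proof (cases "w = 0")
    case True
    have "w \<notin> Sh k" for k using True pk_pos[of k] by (simp add: Sh_def)
    then show ?thesis using True by simp
  next
    case False
    then obtain m where m: "N w = pk m" using N_val by blast
    show ?thesis
    proof (cases "K0 \<le> m")
      case True
      have ws: "w \<in> Sh (K0 + int (nat (m - K0)))" using True m by (simp add: Sh_def)
      have "1 / r \<le> N w" using inv_le_pk[OF r, of m] True m K0_def by simp
      then show ?thesis unfolding shell_sum_at[OF inj ws] using True m by (simp add: \<rho>_def)
    next
      case False
      have "\<not> 1 / r \<le> N w" using inv_le_pk[OF r, of m] False m K0_def by simp
      moreover have "w \<notin> Sh (K0 + int i)" for i
        unfolding Sh_def mem_Collect_eq m using pk_inj[of m "K0 + int i"] False by auto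
      ultimately show ?thesis by simp
    qed
  qed
qed

lemma D_near: assumes r: "r > 0" shows "emeasure D ({0} \<union> {w. 1 / r \<le> N w}) = ennreal (Vol \<lfloor>log (real q) r\<rfloor>)"
proof -
  define K0 where "K0 = - \<lfloor>log (real q) r\<rfloor>"
  have inj: "inj (\<lambda>i::nat. K0 + int i)" by (rule injI) simp
  have eq: "(\<lambda>w. \<rho> w * indicator ({0} \<union> {w. 1 / r \<le> N w}) w) = (\<lambda>w. \<rho> w * indicator {w. 1 / r \<le> N w} w)"
  proof (rule ext)
    fix w show "\<rho> w * indicator ({0} \<union> {w. 1 / r \<le> N w}) w = \<rho> w * indicator {w. 1 / r \<le> N w} w"
      by (cases "w = 0") (auto simp: indicator_def)
  qed
  have S: "(\<lambda>w. \<rho> w * indicator {w. 1 / r \<le> N w} w) = (\<lambda>w. \<Sum>i. pk (K0 + int i) powr (- 2 * real d) * indicator (Sh (K0 + int i)) w)"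
    using rho_ge_shell[OF r] K0_def by auto
  have summ: "summable (\<lambda>i. \<bar>pk (K0 + int i) powr (- 2 * real d)\<bar> * measure M (Sh (K0 + int i)))"
    using geo_shell(2)[of K0] by simp
  have int: "integrable M (\<lambda>w. \<rho> w * indicator {w. 1 / r \<le> N w} w)"
    unfolding S by (rule shell_integrable[OF inj summ])
  have "(\<integral>w. \<rho> w * indicator {w. 1 / r \<le> N w} w \<partial>M) = (\<Sum>i. pk (K0 + int i) powr (- 2 * real d) * measure M (Sh (K0 + int i)))"
    unfolding S by (rule shell_integral[OF inj summ])
  also have "\<dots> = Vol (- K0)" using geo_shell(1)[of K0] sums_unique by (metis (no_types))
  finally have I: "(\<integral>w. \<rho> w * indicator {w. 1 / r \<le> N w} w \<partial>M) = Vol \<lfloor>log (real q) r\<rfloor>" unfolding K0_def by simp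
  have "emeasure D ({0} \<union> {w. 1 / r \<le> N w}) = (\<integral>\<^sup>+ w. ennreal (\<rho> w * indicator ({0} \<union> {w. 1 / r \<le> N w}) w) \<partial>M)"
  proof -
    have "{0} \<union> {w. 1 / r \<le> N w} \<in> sets M" using single_sets ge_sets by (rule sets.Un)
    then show ?thesis by (subst emeasure_D) (auto intro!: nn_integral_cong simp: indicator_def)
  qed
  also have "\<dots> = (\<integral>\<^sup>+ w. ennreal (\<rho> w * indicator {w. 1 / r \<le> N w} w) \<partial>M)"
  proof (intro nn_integral_cong)
    fix w show "ennreal (\<rho> w * indicator ({0} \<union> {w. 1 / r \<le> N w}) w) = ennreal (\<rho> w * indicator {w. 1 / r \<le> N w} w)"
      using fun_cong[OF eq, of w] by (simp only:)
  qed
  also have "\<dots> = ennreal (\<integral>w. \<rho> w * indicator {w. 1 / r \<le> N w} w \<partial>M)"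
    using int \<rho>_nonneg by (intro nn_integral_eq_integral) (auto simp: indicator_def)
  finally show ?thesis unfolding I .
qed

end

context KL begin

lemma D_single: "emeasure D {p} = 0"
proof -
  have "emeasure D {p} = (\<integral>\<^sup>+ w. ennreal (\<rho> w) * indicator {p} w \<partial>M)" by (rule emeasure_D) simp
  also have "\<dots> = (\<integral>\<^sup>+ w. ennreal (\<rho> p) * indicator {p} w \<partial>M)"
    by (intro nn_integral_cong) (auto simp: indicator_def)
  also have "\<dots> = ennreal (\<rho> p) * emeasure M {p}" by (rule nn_integral_cmult_indicator) simp
  finally show ?thesis using single_null by simp
qed

lemma Vol_zero: "Vol 0 = 1" unfolding Vol_def using q_pos by simp

lemma D_far:
  assumes r: "0 < r" "r < N a"
  shows "emeasure D (cb (J a) (r / (N a)^2)) = ennreal (Vol \<lfloor>log (real q) r\<rfloor>)"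
proof -
  define B where "B = cb (J a) (r / (N a)^2)"
  have a0: "a \<noteq> 0" using r by auto
  have Na: "N a > 0" using N_pos[OF a0] .
  obtain j where j: "N a = pk j" using N_val[OF a0] by blast
  define c where "c = N a powr (2 * real d)"
  have c0: "c \<ge> 0" unfolding c_def by simp
  have onB: "\<rho> w = c" if "w \<in> B" for w
  proof -
    have "r / (N a)^2 < 1 / N a" using r Na by (simp add: power2_eq_square divide_simps)
    then have "N (w - J a) < N (J a)" using that N_J[of a] by (simp add: B_def cb_def)
    then have "N (J a + (w - J a)) = N (J a)" by (rule N_strict)
    then have Nw: "N w = N a powr (-1)" using N_J[of a] Na by (simp add: powr_minus_divide)
    have "(N a powr (-1)) powr (- 2 * real d) = N a powr ((-1) * (- 2 * real d))" by (rule powr_powr)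
    then have "(N a powr (-1)) powr (- 2 * real d) = N a powr (2 * real d)" by simp
    then show ?thesis unfolding \<rho>_def Nw c_def .
  qed
  have "emeasure D B = (\<integral>\<^sup>+ w. ennreal (\<rho> w) * indicator B w \<partial>M)" by (rule emeasure_D) (simp add: B_def)
  also have "\<dots> = (\<integral>\<^sup>+ w. ennreal c * indicator B w \<partial>M)"
    by (intro nn_integral_cong) (auto simp: indicator_def onB)
  also have "\<dots> = ennreal c * emeasure M B" by (rule nn_integral_cmult_indicator) (simp add: B_def)
  also have "emeasure M B = ennreal (Vol \<lfloor>log (real q) (r / (N a)^2)\<rfloor>)"
  proof -
    have "r / (N a)^2 > 0" using r(1) Na by (intro divide_pos_pos) auto
    then show ?thesis unfolding B_def by (rule ball_meas_pos)
  qed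
  also have "\<lfloor>log (real q) (r / (N a)^2)\<rfloor> = \<lfloor>log (real q) r\<rfloor> - 2 * j"
  proof -
    have "(N a)^2 = real q powr (2 * real_of_int j)" unfolding j using q_pos
      by (simp add: power2_eq_square powr_add[symmetric])
    then have "log (real q) (r / (N a)^2) = log (real q) r - 2 * real_of_int j"
      using r q_gt1 by (simp add: log_divide_pos)
    then show ?thesis by (metis floor_diff_of_int of_int_mult of_int_numeral)
  qed
  also have "Vol (\<lfloor>log (real q) r\<rfloor> - 2 * j) = Vol \<lfloor>log (real q) r\<rfloor> * Vol (- 2 * j)"
    using Vol_add[of "\<lfloor>log (real q) r\<rfloor>" "- 2 * j"] by simp
  also have "ennreal c * ennreal (Vol \<lfloor>log (real q) r\<rfloor> * Vol (- 2 * j)) = ennreal (Vol \<lfloor>log (real q) r\<rfloor> * (c * Vol (- 2 * j)))"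
  proof -
    have "ennreal c * ennreal (Vol \<lfloor>log (real q) r\<rfloor> * Vol (- 2 * j)) = ennreal (c * (Vol \<lfloor>log (real q) r\<rfloor> * Vol (- 2 * j)))"
      using c0 by (rule ennreal_mult'[symmetric])
    then show ?thesis by (simp add: mult_ac)
  qed
  also have "c * Vol (- 2 * j) = 1"
  proof -
    have "c = Vol (2 * j)" unfolding c_def j Vol_def using q_pos by (simp add: powr_powr mult_ac)
    then show ?thesis using Vol_add[of "2 * j" "- 2 * j"] Vol_zero by simp
  qed
  finally show ?thesis unfolding B_def by simp
qed

lemma distr_eq: "distr D M J = M"
proof -
  define A where "A = (\<lambda>i::nat. cb (0 :: 'k ^ 'n) (pk (int i)))"
  have JD: "J \<in> measurable D M" using J_meas by (simp add: measurable_cong_sets[OF sets_D refl])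
  have "M = distr D M J"
  proof (rule measure_eqI_generator_eq[OF Int_stable_Ecb, of UNIV _ _ A])
    show "Ecb \<subseteq> Pow UNIV" by simp
    show "sets M = sigma_sets UNIV Ecb" by (rule sets_M)
    show "sets (distr D M J) = sigma_sets UNIV Ecb" by (simp add: sets_M)
    show "range A \<subseteq> Ecb" unfolding A_def Ecb_def by blast
    show "emeasure M (A i) \<noteq> \<infinity>" for i unfolding A_def using ball_meas[of 0 "int i"] by simp
    show "(\<Union>i. A i) = UNIV"
    proof (intro equalityI subsetI UNIV_I)
      fix w :: "'k ^ 'n"
      obtain n where n: "N w < real q ^ n" using real_arch_pow[OF q_gt1] by blast
      have "pk (int n) = real q ^ n" using q_pos by (simp add: powr_realpow)
      then have "w \<in> A n" using n by (simp add: A_def cb_def)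
      then show "w \<in> (\<Union>i. A i)" by blast
    qed
    fix X :: "('k ^ 'n) set" assume "X \<in> Ecb"
    then obtain a r where X: "X = cb a r" unfolding Ecb_def by blast
    have "emeasure (distr D M J) X = emeasure D (J -` X)"
      using emeasure_distr[OF JD, of X] X by simp
    also have "\<dots> = emeasure M X"
    proof (cases "r < 0")
      case True then show ?thesis using J_pre_neg[OF True, of a] cb_empty[OF True, of a] X by simp
    next
      case False
      show ?thesis
      proof (cases "r = 0")
        case True then show ?thesis using J_pre_zero[of a] X D_single[of "J a"] cb_single[of a] single_null[of a] by simp
      next
        case r0: False
        then have rp: "r > 0" using False by simp
        show ?thesis
        proof (cases "r < N a")
          case True
          then show ?thesis using J_pre_far[of r a] rp D_far[OF rp True] ball_meas_pos[OF rp] X by simp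
        next
          case far: False
          then show ?thesis using J_pre_near[of r a] D_near[OF rp] ball_meas_pos[OF rp] X rp by simp
        qed
      qed
    qed
    finally show "emeasure M X = emeasure (distr D M J) X" by simp
  qed
  then show ?thesis by simp
qed

end

lemma E_comb:
  fixes x :: real assumes "x > 0"
  shows "(x powr a * x powr b - 1) / x powr c * (x powr e * K) = (x powr (a + b + e - c) - x powr (e - c)) * K"
proof -
  have 1: "x powr (a + b + e - c) = x powr a * x powr b * x powr e / x powr c"
    using assms by (simp add: powr_add powr_diff)
  have 2: "x powr (e - c) = x powr e / x powr c" using assms by (simp add: powr_diff)
  have 3: "x powr c \<noteq> 0" using assms by simp
  show ?thesis unfolding 1 2 using 3 by (simp add: field_simps)
qed

lemma E_lin:
  fixes x :: real assumes "x > 0"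
  shows "x powr (u - real (Suc i) * v) = x powr (u - v) * (x powr (- v)) ^ i"
proof -
  have "(x powr (- v)) ^ i = x powr (real i * (- v))" using assms by (simp add: powr_power)
  then have "x powr (u - v) * (x powr (- v)) ^ i = x powr (u - v) * x powr (real i * (- v))" by simp
  also have "\<dots> = x powr (u - v + real i * (- v))" by (rule powr_add[symmetric])
  finally have "x powr (u - v) * (x powr (- v)) ^ i = x powr (u - v + real i * (- v))" .
  then show ?thesis by (simp add: algebra_simps)
qed

context KL begin

lemma geo_summable:
  assumes "t > 0"
  shows "summable (\<lambda>i. real q powr (u - real (Suc i) * t))"
proof -
  have "real q powr (- t) < 1"
  proof -
    have "real q powr (- t) < real q powr 0" using q_gt1 assms by (subst powr_less_cancel_iff) auto
    then show ?thesis using q_pos by simp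
  qed
  then have "summable (\<lambda>i. real q powr (u - t) * (real q powr (- t)) ^ i)"
    by (intro summable_mult summable_geometric) simp
  then show ?thesis unfolding E_lin[OF q_pos] .
qed

lemma riesz:
  fixes x :: "'k ^ 'n" and \<alpha> :: real
  assumes x0: "x \<noteq> 0" and \<alpha>: "\<alpha> > 0"
  defines "g \<equiv> \<lambda>w. if w = 0 then 0 else (N x powr (real d - \<alpha>) * N w powr (\<alpha> - real d) - 1) / N (x - w) powr (real d + \<alpha>)"
  shows "integrable M g" "integral\<^sup>L M g = 0"
proof -
  obtain m where m: "N x = pk m" using N_val[OF x0] by blast
  define \<sigma>A where "\<sigma>A = (\<lambda>i::nat. m - 1 - int i)"
  define \<sigma>B where "\<sigma>B = (\<lambda>i::nat. m + 1 + int i)"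
  define \<phi>A where "\<phi>A = (\<lambda>i. (N x powr (real d - \<alpha>) * pk (\<sigma>A i) powr (\<alpha> - real d) - 1) / N x powr (real d + \<alpha>))"
  define \<phi>B where "\<phi>B = (\<lambda>i. (N x powr (real d - \<alpha>) * pk (\<sigma>B i) powr (\<alpha> - real d) - 1) / pk (\<sigma>B i) powr (real d + \<alpha>))"
  define gA where "gA = (\<lambda>w. \<Sum>i. \<phi>A i * indicator (Sh (\<sigma>A i)) w)"
  define gB where "gB = (\<lambda>w. \<Sum>i. \<phi>B i * indicator (Sh (\<sigma>B i)) w)"
  have injA: "inj \<sigma>A" unfolding \<sigma>A_def by (rule injI) simp
  have injB: "inj \<sigma>B" unfolding \<sigma>B_def by (rule injI) simp
  have Nx: "N x > 0" using N_pos[OF x0] .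
  have dec: "g w = gA w + gB w" for w
  proof (cases "w = 0")
    case True
    have "w \<notin> Sh k" for k using True pk_pos[of k] by (simp add: Sh_def)
    then show ?thesis using True by (simp add: g_def gA_def gB_def)
  next
    case w0: False
    then obtain k where k: "N w = pk k" using N_val by blast
    have notin: "w \<notin> Sh j" if "j \<noteq> k" for j using that k pk_inj by (simp add: Sh_def)
    consider "k < m" | "k = m" | "k > m" by linarith
    then show ?thesis
    proof cases
      case 1
      define i where "i = nat (m - 1 - k)"
      have ws: "w \<in> Sh (\<sigma>A i)" using 1 k by (simp add: Sh_def i_def \<sigma>A_def)
      have "\<sigma>B j \<noteq> k" for j using 1 by (simp add: \<sigma>B_def)
      then have B0: "gB w = 0" unfolding gB_def using notin by simp
      have "N w < N x" using 1 k m pk_less_iff by simp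
      then have "N (x + - w) = N x" by (intro N_strict) simp
      then have Nxw: "N (x - w) = N x" by simp
      have "\<sigma>A i = k" using 1 by (simp add: \<sigma>A_def i_def)
      then have "gA w = \<phi>A i" unfolding gA_def using shell_sum_at[OF injA ws] by simp
      then show ?thesis using B0 w0 Nxw k \<open>\<sigma>A i = k\<close> by (simp add: g_def \<phi>A_def)
    next
      case 2
      have "\<sigma>A j \<noteq> k" "\<sigma>B j \<noteq> k" for j using 2 by (simp_all add: \<sigma>A_def \<sigma>B_def)
      then have "gA w = 0" "gB w = 0" unfolding gA_def gB_def using notin by simp_all
      moreover have "N x powr (real d - \<alpha>) * N w powr (\<alpha> - real d) = 1"
        using 2 k m Nx by (simp add: powr_add[symmetric])
      ultimately show ?thesis by (simp add: g_def)
    next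
      case 3
      define i where "i = nat (k - m - 1)"
      have ws: "w \<in> Sh (\<sigma>B i)" using 3 k by (simp add: Sh_def i_def \<sigma>B_def)
      have "\<sigma>A j \<noteq> k" for j using 3 by (simp add: \<sigma>A_def)
      then have A0: "gA w = 0" unfolding gA_def using notin by simp
      have "N x < N (- w)" using 3 k m pk_less_iff by simp
      then have "N (- w + x) = N (- w)" by (rule N_strict)
      then have Nxw: "N (x - w) = N w" by (simp add: add.commute)
      have "\<sigma>B i = k" using 3 by (simp add: \<sigma>B_def i_def)
      then have "gB w = \<phi>B i" unfolding gB_def using shell_sum_at[OF injB ws] by simp
      then show ?thesis using A0 w0 Nxw k \<open>\<sigma>B i = k\<close> by (simp add: g_def \<phi>B_def)
    qed
  qed
  define tA where "tA = (\<lambda>i::nat. (1 - cq) * (real q powr (- real_of_int m * \<alpha> - real (Suc i) * \<alpha>) - real q powr (- real_of_int m * \<alpha> - real (Suc i) * real d)))"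
  have termA: "\<phi>A i * measure M (Sh (\<sigma>A i)) = tA i" for i
  proof -
    have "\<phi>A i * measure M (Sh (\<sigma>A i)) =
      (real q powr (real_of_int m * (real d - \<alpha>)) * real q powr (real_of_int (\<sigma>A i) * (\<alpha> - real d)) - 1) / real q powr (real_of_int m * (real d + \<alpha>))
        * (real q powr (real_of_int (\<sigma>A i) * real d) * (1 - cq))"
      unfolding \<phi>A_def Sh_measure' Vol_def m by (simp add: powr_powr)
    also have "\<dots> = (real q powr (real_of_int m * (real d - \<alpha>) + real_of_int (\<sigma>A i) * (\<alpha> - real d) + real_of_int (\<sigma>A i) * real d - real_of_int m * (real d + \<alpha>))
        - real q powr (real_of_int (\<sigma>A i) * real d - real_of_int m * (real d + \<alpha>))) * (1 - cq)"
      by (rule E_comb[OF q_pos])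
    also have "real_of_int m * (real d - \<alpha>) + real_of_int (\<sigma>A i) * (\<alpha> - real d) + real_of_int (\<sigma>A i) * real d - real_of_int m * (real d + \<alpha>)
       = - real_of_int m * \<alpha> - real (Suc i) * \<alpha>" by (simp add: \<sigma>A_def algebra_simps)
    also have "real_of_int (\<sigma>A i) * real d - real_of_int m * (real d + \<alpha>) = - real_of_int m * \<alpha> - real (Suc i) * real d"
      by (simp add: \<sigma>A_def algebra_simps)
    also have "(real q powr (- real_of_int m * \<alpha> - real (Suc i) * \<alpha>) - real q powr (- real_of_int m * \<alpha> - real (Suc i) * real d)) * (1 - cq) = tA i"
      unfolding tA_def by (simp add: mult_ac)
    finally show ?thesis .
  qed
  have termB: "\<phi>B i * measure M (Sh (\<sigma>B i)) = - tA i" for i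
  proof -
    have "\<phi>B i * measure M (Sh (\<sigma>B i)) =
      (real q powr (real_of_int m * (real d - \<alpha>)) * real q powr (real_of_int (\<sigma>B i) * (\<alpha> - real d)) - 1) / real q powr (real_of_int (\<sigma>B i) * (real d + \<alpha>))
        * (real q powr (real_of_int (\<sigma>B i) * real d) * (1 - cq))"
      unfolding \<phi>B_def Sh_measure' Vol_def m by (simp add: powr_powr)
    also have "\<dots> = (real q powr (real_of_int m * (real d - \<alpha>) + real_of_int (\<sigma>B i) * (\<alpha> - real d) + real_of_int (\<sigma>B i) * real d - real_of_int (\<sigma>B i) * (real d + \<alpha>))
        - real q powr (real_of_int (\<sigma>B i) * real d - real_of_int (\<sigma>B i) * (real d + \<alpha>))) * (1 - cq)"
      by (rule E_comb[OF q_pos])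
    also have "real_of_int m * (real d - \<alpha>) + real_of_int (\<sigma>B i) * (\<alpha> - real d) + real_of_int (\<sigma>B i) * real d - real_of_int (\<sigma>B i) * (real d + \<alpha>)
       = - real_of_int m * \<alpha> - real (Suc i) * real d" by (simp add: \<sigma>B_def algebra_simps)
    also have "real_of_int (\<sigma>B i) * real d - real_of_int (\<sigma>B i) * (real d + \<alpha>) = - real_of_int m * \<alpha> - real (Suc i) * \<alpha>"
      by (simp add: \<sigma>B_def algebra_simps)
    also have "(real q powr (- real_of_int m * \<alpha> - real (Suc i) * real d) - real q powr (- real_of_int m * \<alpha> - real (Suc i) * \<alpha>)) * (1 - cq) = - tA i"
      unfolding tA_def by (simp add: algebra_simps)
    finally show ?thesis .
  qed
  have sumtA: "summable (\<lambda>i. \<bar>tA i\<bar>)"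
  proof (rule summable_comparison_test)
    let ?G = "\<lambda>i. (1 - cq) * (real q powr (- real_of_int m * \<alpha> - real (Suc i) * \<alpha>) + real q powr (- real_of_int m * \<alpha> - real (Suc i) * real d))"
    have "\<bar>tA n\<bar> \<le> ?G n" for n
    proof -
      define a where "a = real q powr (- real_of_int m * \<alpha> - real (Suc n) * \<alpha>)"
      define b where "b = real q powr (- real_of_int m * \<alpha> - real (Suc n) * real d)"
      have ab: "a > 0" "b > 0" unfolding a_def b_def using q_pos by simp_all
      have "\<bar>tA n\<bar> = \<bar>1 - cq\<bar> * \<bar>a - b\<bar>" unfolding tA_def a_def[symmetric] b_def[symmetric] by (rule Rings.abs_mult)
      also have "\<bar>1 - cq\<bar> * \<bar>a - b\<bar> = (1 - cq) * \<bar>a - b\<bar>" using cq_lt1 by simp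
      also have "\<dots> \<le> (1 - cq) * (a + b)" using ab cq_lt1 by (intro mult_left_mono) auto
      finally show ?thesis unfolding a_def b_def .
    qed
    then show "\<exists>N. \<forall>n\<ge>N. norm \<bar>tA n\<bar> \<le> ?G n" by auto
    show "summable ?G" using \<alpha> d_pos
      by (intro summable_mult summable_add geo_summable) auto
  qed
  have mnn: "measure M (Sh k) \<ge> 0" for k by simp
  have sA: "summable (\<lambda>i. \<bar>\<phi>A i\<bar> * measure M (Sh (\<sigma>A i)))"
  proof -
    have "\<bar>\<phi>A i\<bar> * measure M (Sh (\<sigma>A i)) = \<bar>tA i\<bar>" for i
      using termA[of i] mnn[of "\<sigma>A i"] by (metis Rings.abs_mult abs_of_nonneg)
    then show ?thesis using sumtA by simp
  qed
  have sB: "summable (\<lambda>i. \<bar>\<phi>B i\<bar> * measure M (Sh (\<sigma>B i)))"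
  proof -
    have "\<bar>\<phi>B i\<bar> * measure M (Sh (\<sigma>B i)) = \<bar>tA i\<bar>" for i
      using termB[of i] mnn[of "\<sigma>B i"] by (metis abs_minus_cancel Rings.abs_mult abs_of_nonneg)
    then show ?thesis using sumtA by simp
  qed
  have iA: "integrable M gA" unfolding gA_def by (rule shell_integrable[OF injA sA])
  have iB: "integrable M gB" unfolding gB_def by (rule shell_integrable[OF injB sB])
  have gfun: "g = (\<lambda>w. gA w + gB w)" using dec by auto
  show "integrable M g" unfolding gfun using iA iB by simp
  have IA: "integral\<^sup>L M gA = (\<Sum>i. tA i)" unfolding gA_def shell_integral[OF injA sA] termA ..
  have IB: "integral\<^sup>L M gB = (\<Sum>i. - tA i)" unfolding gB_def shell_integral[OF injB sB] termB ..
  have st: "summable tA" using sumtA summable_rabs_cancel by blast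
  have "integral\<^sup>L M g = integral\<^sup>L M gA + integral\<^sup>L M gB" unfolding gfun using iA iB by simp
  also have "\<dots> = 0" unfolding IA IB using suminf_minus[OF st] by simp
  finally show "integral\<^sup>L M g = 0" .
qed

end

context KL begin

abbreviation Ku where "Ku \<alpha> u \<equiv> kelvin absK \<iota> e \<alpha> u"

lemma kelvin_J: "x \<noteq> 0 \<Longrightarrow> Ku \<alpha> u (J x) = complex_of_real ((1 / N x) powr (\<alpha> - real d)) * u x"
  unfolding kelvin_def using N_J[of x] d_def by simp

lemma kelvin_pt:
  fixes u :: "'k ^ 'n \<Rightarrow> complex"
  assumes x0: "x \<noteq> 0" and w0: "w \<noteq> 0"
  shows "\<rho> w *\<^sub>R ((Ku \<alpha> u (J x) - Ku \<alpha> u (J w)) / complex_of_real (N (J x - J w) powr (real d + \<alpha>)))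
    = complex_of_real (N x powr (real d + \<alpha>)) * ((u x - u w) / complex_of_real (N (x - w) powr (real d + \<alpha>))
        + u x * complex_of_real ((N x powr (real d - \<alpha>) * N w powr (\<alpha> - real d) - 1) / N (x - w) powr (real d + \<alpha>)))"
proof (cases "w = x")
  case True
  then show ?thesis by simp
next
  case False
  define a where "a = N x"
  define b where "b = N w"
  define c where "c = N (x - w)"
  define p where "p = real d + \<alpha>"
  have a: "a > 0" unfolding a_def using N_pos[OF x0] .
  have b: "b > 0" unfolding b_def using N_pos[OF w0] .
  have c: "c > 0" unfolding c_def using N_pos[of "x - w"] False by simp
  have NJ: "N (J x - J w) = c / (a * b)" unfolding a_def b_def c_def using N_J_diff[OF x0 w0] .
  have Ainv: "(1 / a) powr (\<alpha> - real d) = a powr (real d - \<alpha>)"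
    using a by (simp add: powr_divide powr_minus_divide[symmetric])
  have Binv: "(1 / b) powr (\<alpha> - real d) = b powr (real d - \<alpha>)"
    using b by (simp add: powr_divide powr_minus_divide[symmetric])
  have Q: "(c / (a * b)) powr p = c powr p / (a powr p * b powr p)"
    using a b c by (simp add: powr_divide powr_mult)
  have rw: "\<rho> w = b powr (- 2 * real d)" unfolding \<rho>_def b_def ..
  define K1 where "K1 = a powr p * (a powr (real d - \<alpha>) * b powr (\<alpha> - real d)) / c powr p"
  define K2 where "K2 = a powr p / c powr p"
  have k1: "b powr (- 2 * real d) * a powr (real d - \<alpha>) / (c powr p / (a powr p * b powr p)) = K1"
  proof -
    have "b powr (- 2 * real d) * b powr p = b powr (\<alpha> - real d)"
      unfolding p_def using b by (simp add: powr_add[symmetric])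
    then show ?thesis unfolding K1_def using a b c by (simp add: field_simps)
  qed
  have k2: "b powr (- 2 * real d) * b powr (real d - \<alpha>) / (c powr p / (a powr p * b powr p)) = K2"
  proof -
    have "b powr (- 2 * real d) * b powr (real d - \<alpha>) * b powr p = 1"
      unfolding p_def using b by (simp add: powr_add[symmetric])
    then show ?thesis unfolding K2_def using a b c by (simp add: field_simps)
  qed
  have L: "\<rho> w *\<^sub>R ((Ku \<alpha> u (J x) - Ku \<alpha> u (J w)) / complex_of_real (N (J x - J w) powr (real d + \<alpha>)))
      = complex_of_real K1 * u x - complex_of_real K2 * u w"
  proof -
    have "\<rho> w *\<^sub>R ((Ku \<alpha> u (J x) - Ku \<alpha> u (J w)) / complex_of_real (N (J x - J w) powr (real d + \<alpha>)))
      = complex_of_real (b powr (- 2 * real d)) * ((complex_of_real (a powr (real d - \<alpha>)) * u x - complex_of_real (b powr (real d - \<alpha>)) * u w)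
          / complex_of_real (c powr p / (a powr p * b powr p)))"
      unfolding rw kelvin_J[OF x0] kelvin_J[OF w0] NJ a_def[symmetric] b_def[symmetric] Ainv Binv p_def[symmetric] Q
      by (simp add: scaleR_conv_of_real)
    also have "\<dots> = complex_of_real (b powr (- 2 * real d) * a powr (real d - \<alpha>) / (c powr p / (a powr p * b powr p))) * u x
        - complex_of_real (b powr (- 2 * real d) * b powr (real d - \<alpha>) / (c powr p / (a powr p * b powr p))) * u w"
      by (simp add: divide_inverse algebra_simps)
    finally show ?thesis unfolding k1 k2 .
  qed
  have R: "complex_of_real (N x powr (real d + \<alpha>)) * ((u x - u w) / complex_of_real (N (x - w) powr (real d + \<alpha>))
        + u x * complex_of_real ((N x powr (real d - \<alpha>) * N w powr (\<alpha> - real d) - 1) / N (x - w) powr (real d + \<alpha>)))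
      = complex_of_real K1 * u x - complex_of_real K2 * u w"
    unfolding a_def[symmetric] b_def[symmetric] c_def[symmetric] p_def[symmetric] K1_def K2_def
    using c by (simp add: field_simps)
  show ?thesis unfolding L R ..
qed

end

context KL begin

lemma if0_meas:
  assumes "A \<in> borel_measurable M" "B \<in> borel_measurable M"
  shows "(\<lambda>w. if w = 0 then A w else B w) \<in> borel_measurable M"
proof -
  have "(\<lambda>w. if w \<in> {0} then A w else B w) \<in> borel_measurable M"
    using assms single_sets[of 0] by (intro measurable_If_set) auto
  then show ?thesis by simp
qed

lemma main_KL:
  fixes u :: "'k ^ 'n \<Rightarrow> complex" and \<alpha> :: real
  assumes x0: "x \<noteq> 0" and \<alpha>: "\<alpha> > 0" and hx: "VT_op absK q M \<alpha> u x = 0"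
  shows "VT_op absK q M \<alpha> (Ku \<alpha> u) (J x) = 0"
proof -
  define p where "p = real d + \<alpha>"
  define cst where "cst = (real q - 1) / (1 - real q powr (- \<alpha> - real d))"
  have "real q powr (- \<alpha> - real d) < real q powr 0"
    using q_gt1 \<alpha> by (subst powr_less_cancel_iff) auto
  then have "real q powr (- \<alpha> - real d) < 1" using q_pos by simp
  then have "cst > 0" unfolding cst_def using q_gt1 by (intro divide_pos_pos) auto
  then have cst0: "cst \<noteq> 0" by simp
  define f where "f = (\<lambda>w. (u x - u w) / complex_of_real (N (x - w) powr p))"
  define F where "F = (\<lambda>z. (Ku \<alpha> u (J x) - Ku \<alpha> u z) / complex_of_real (N (J x - z) powr p))"
  have VTe: "VT_op absK q M \<alpha> v y = complex_of_real cst * (\<integral>z. (v y - v z) / complex_of_real (N (y - z) powr p) \<partial>M)" for v y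
    unfolding VT_op_def cst_def p_def d_def by simp
  have If: "integral\<^sup>L M f = 0" using hx cst0 unfolding VTe f_def by simp
  have "integral\<^sup>L M F = 0"
  proof (cases "F \<in> borel_measurable M")
    case False
    then have "\<not> integrable M F" using borel_measurable_integrable by blast
    then show ?thesis by (rule not_integrable_integral_eq)
  next
    case Fm: True
    have JD: "J \<in> measurable D M" using J_meas by (simp add: measurable_cong_sets[OF sets_D refl])
    have FJm: "(\<lambda>w. F (J w)) \<in> borel_measurable M" using measurable_compose[OF J_meas Fm] by (simp add: comp_def)
    define T where "T = (\<lambda>w. \<rho> w *\<^sub>R F (J w))"
    have Tm: "T \<in> borel_measurable M" unfolding T_def using FJm by measurable
    have "integral\<^sup>L M F = integral\<^sup>L (distr D M J) F" using distr_eq by simp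
    also have "\<dots> = integral\<^sup>L D (\<lambda>w. F (J w))" by (rule integral_distr[OF JD Fm])
    also have "\<dots> = integral\<^sup>L M T" unfolding D_def T_def
      by (rule integral_density) (use FJm \<rho>_nonneg in auto)
    finally have IFT: "integral\<^sup>L M F = integral\<^sup>L M T" .
    define g where "g = (\<lambda>w. if w = 0 then 0 else (N x powr (real d - \<alpha>) * N w powr (\<alpha> - real d) - 1) / N (x - w) powr (real d + \<alpha>))"
    have gm: "g \<in> borel_measurable M" unfolding g_def by (intro if0_meas) measurable
    have gi: "integrable M g" and g0: "integral\<^sup>L M g = 0" using riesz[OF x0 \<alpha>] unfolding g_def by auto
    define C where "C = complex_of_real (N x powr p)"
    have C0: "C \<noteq> 0" unfolding C_def using N_pos[OF x0] x0 by simp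
    have pt: "T w = C * (f w + u x * complex_of_real (g w))" if "w \<noteq> 0" for w
      unfolding T_def F_def C_def f_def g_def p_def using kelvin_pt[OF x0 that, of \<alpha> u] that by simp
    have fe: "f = (\<lambda>w. if w = 0 then f 0 else T w / C - u x * complex_of_real (g w))"
    proof
      fix w show "f w = (if w = 0 then f 0 else T w / C - u x * complex_of_real (g w))"
        using pt[of w] C0 by (cases "w = 0") (auto simp: field_simps)
    qed
    have fm: "f \<in> borel_measurable M" by (subst fe, intro if0_meas) (use Tm gm in measurable)
    define R where "R = (\<lambda>w. C * (f w + u x * complex_of_real (g w)))"
    have Rm: "R \<in> borel_measurable M" unfolding R_def using fm gm by measurable
    have AE: "AE w in M. T w = R w" using AE_ne[of 0] pt unfolding R_def by auto
    have ITR: "integral\<^sup>L M T = integral\<^sup>L M R" by (rule integral_cong_AE[OF Tm Rm AE])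
    show ?thesis
    proof (cases "integrable M f")
      case True
      have gi': "integrable M (\<lambda>w. u x * complex_of_real (g w))" using gi by auto
      have "integral\<^sup>L M R = C * (integral\<^sup>L M f + u x * complex_of_real (integral\<^sup>L M g))"
        unfolding R_def using True gi' by simp
      then show ?thesis using IFT ITR If g0 by simp
    next
      case False
      have "\<not> integrable M T"
      proof
        assume "integrable M T"
        then have "integrable M R" using integrable_cong_AE[OF Tm Rm AE] by simp
        then have "integrable M (\<lambda>w. R w / C - u x * complex_of_real (g w))" using gi by auto
        moreover have "(\<lambda>w. R w / C - u x * complex_of_real (g w)) = f" unfolding R_def using C0 by auto
        ultimately show False using False by simp
      qed
      then show ?thesis using IFT not_integrable_integral_eq by metis
    qed
  qed
  then show ?thesis unfolding VTe F_def by simp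
qed

end

theorem mainTheorem2:
  fixes absK :: "'k::field \<Rightarrow> real" and q :: nat
    and M :: "('k ^ 'n::finite) measure" and chi :: "'k \<Rightarrow> complex"
    and absL :: "'l::field \<Rightarrow> real" and \<iota> :: "'k \<Rightarrow> 'l" and e :: "'n \<Rightarrow> 'l"
    and \<alpha> :: real and G :: "('k ^ 'n) set" and u :: "'k ^ 'n \<Rightarrow> complex"
  assumes "nonarch_local_field absK q"
    and "haar_Kn absK M"
    and "rank_zero_char absK q chi"
    and "unram_canonical_basis absK absL \<iota> e"
    and "CARD('n) \<ge> 2"
    and "\<alpha> > 0"
    and "0 \<notin> G"
    and "H_infty absK M chi u"
    and "\<forall>x\<in>G. VT_op absK q M \<alpha> u x = 0"
  shows "\<forall>y\<in>J_map \<iota> e ` G. VT_op absK q M \<alpha> (kelvin absK \<iota> e \<alpha> u) y = 0"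
proof -
  interpret KL absK q M "CARD('n)" absL \<iota> e
    using assms(1,2,4) by unfold_locales auto
  show ?thesis
  proof
    fix y assume "y \<in> J_map \<iota> e ` G"
    then obtain x where x: "x \<in> G" "y = J_map \<iota> e x" by blast
    have x0: "x \<noteq> 0" using x(1) assms(7) by blast
    have "VT_op absK q M \<alpha> u x = 0" using assms(9) x(1) by blast
    from main_KL[OF x0 assms(6) this] show "VT_op absK q M \<alpha> (kelvin absK \<iota> e \<alpha> u) y = 0"
      using x(2) by simp
  qed
qed

end
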